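(* Let $X$ be a finite simplicial complex with $n$ simplices and let $F,G:X\to\mathbb{R}^2$ be functions such that $F(\tau)\le F(\sigma)$ and $G(\tau)\le G(\sigma)$ whenever $\tau\subset\sigma$ are simplices of $X$. Let $\mathcal{X}$ and $\mathcal{Y}$ be the sublevel set bi-filtrations of $F$ and $G$. Let $\phi$ be an absolutely bounded and internally stable feature map for mono-filtrations and $R\subset\mathbb{R}^2$ a bounded axis-aligned rectangle whose bottom-left corner is the origin. Then $$\|\Phi_{\mathcal{X}}-\Phi_{\mathcal{Y}}\|_{L^2(\Delta^{(2)})}\le C\cdot n\cdot \mathrm{area}(R)\cdot\|F-G\|_\infty$$ for some constant $C$.
   Context: For $p,q\in\mathbb{R}^2$ write $p\le q$ (resp. $p<q$) if both coordinates satisfy $\le$ (resp. $<$). The sublevel set bi-filtration of $F$ assigns to $p\in\mathbb{R}^2$ the subcomplex $\{\sigma\in X: F(\sigma)\le p\}$. $\|F-G\|_\infty:=\sup_{\sigma\in X}\|F(\sigma)-G(\sigma)\|_\infty$. A mono-filtration of $X$ assigns nested subcomplexes $\mathcal{X}(\alpha)$, $\alpha\in\mathbb{R}$; its size is the number of simplices of $X$. Let $\mathcal{L}$ be the set of non-vertical lines in $\mathbb{R}^2$ with positive slope. Each $\ell\in\mathcal{L}$ meets $x=-y$ in a unique point $b$ and is parametrized as $b+\lambda a$ with $a=(a_1,a_2)$ its unit direction vector with positive coordinates; $\hat{\ell}:=\min\{a_1,a_2\}$. The slice $\mathcal{X}_\ell$ is the mono-filtration $\alpha\mapsto\mathcal{X}(b+\alpha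 a)$. $d_B$ denotes the bottleneck distance between persistence diagrams of mono-filtrations. Let $\Delta^{(1)}:=\{(x_1,x_2):x_1<x_2\}$. A feature map $\phi$ assigns to each mono-filtration $\mathcal{X}$ a function $\phi_{\mathcal{X}}\in L^2(\Delta^{(1)})$; it is absolutely bounded if there is $v_1>0$ with $0\le\phi_{\mathcal{X}}(x)\le v_1 n$ for all mono-filtrations of size $n$ and $x\in\Delta^{(1)}$, and internally stable if there is $v_3>0$ with $|\phi_{\mathcal{X}}(x)-\phi_{\mathcal{Y}}(x)|\le v_3 n\, d_B(\mathcal{X},\mathcal{Y})$ for all mono-filtrations of size $n$ and $x\in\Delta^{(1)}$. Let $\Delta^{(2)}:=\{(p,q)\in\mathbb{R}^2\times\mathbb{R}^2:p<q\}\subset\mathbb{R}^4$ with Lebesgue measure. For $(p,q)\in\Delta^{(2)}$ let $\ell\in\mathcal{L}$ be the line through $p,q$ and $\lambda_p<\lambda_q$ the parameters with $p=b+\lambda_pa$, $q=b+\lambda_qa$; define $\Phi_{\mathcal{X}}(p,q):=\chi_R(p)\chi_R(q)\,\hat{\ell}\,\phi_{\mathcal{X}_\ell}(\lambda_p,\lambda_q)$, with $\chi_R$ the indicator of $R$. *)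

theory Defs
  imports "HOL-Analysis.Analysis" "HOL-Library.Multiset" "HOL-Library.Discrete_Functions"
begin

definition vle :: "real \<times> real \<Rightarrow> real \<times> real \<Rightarrow> bool" where
  "vle p q \<longleftrightarrow> fst p \<le> fst q \<and> snd p \<le> snd q"

definition vlt :: "real \<times> real \<Rightarrow> real \<times> real \<Rightarrow> bool" where
  "vlt p q \<longleftrightarrow> fst p < fst q \<and> snd p < snd q"

definition fin_simplicial_complex :: "'v set set \<Rightarrow> bool" where
  "fin_simplicial_complex K \<longleftrightarrow> finite K \<and>
     (\<forall>\<sigma>\<in>K. finite \<sigma> \<and> \<sigma> \<noteq> {} \<and> (\<forall>\<tau>. \<tau> \<subseteq> \<sigma> \<and> \<tau> \<noteq> {} \<longrightarrow> \<tau> \<in> K))"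

definition subcomplex :: "'v set set \<Rightarrow> 'v set set \<Rightarrow> bool" where
  "subcomplex L K \<longleftrightarrow> L \<subseteq> K \<and> (\<forall>\<sigma>\<in>L. \<forall>\<tau>\<in>K. \<tau> \<subseteq> \<sigma> \<longrightarrow> \<tau> \<in> L)"

type_synonym 'v monofilt = "'v set set \<times> (real \<Rightarrow> 'v set set)"

definition mono_filtration :: "'v monofilt \<Rightarrow> bool" where
  "mono_filtration M \<longleftrightarrow> fin_simplicial_complex (fst M) \<and>
     (\<forall>\<alpha>. subcomplex (snd M \<alpha>) (fst M)) \<and>
     (\<forall>\<alpha> \<beta>. \<alpha> \<le> \<beta> \<longrightarrow> snd M \<alpha> \<subseteq> snd M \<beta>)"

definition mf_size :: "'v monofilt \<Rightarrow> nat" where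
  "mf_size M = card (fst M)"

text \<open>Z/2-chains are sets of simplices, addition is symmetric difference.\<close>

definition symdiff :: "'a set \<Rightarrow> 'a set \<Rightarrow> 'a set" where
  "symdiff A B = (A - B) \<union> (B - A)"

definition set_plus2 :: "'a set set \<Rightarrow> 'a set set \<Rightarrow> 'a set set" where
  "set_plus2 U V = {symdiff u v | u v. u \<in> U \<and> v \<in> V}"

definition ksimplices :: "nat \<Rightarrow> 'v set set \<Rightarrow> 'v set set" where
  "ksimplices k K = {\<sigma>\<in>K. card \<sigma> = Suc k}"

definition chains :: "nat \<Rightarrow> 'v set set \<Rightarrow> 'v set set set" where
  "chains k K = Pow (ksimplices k K)"

definition bd_simplex :: "'v set \<Rightarrow> 'v set set" where
  "bd_simplex \<sigma> = (if 2 \<le> card \<sigma> then (\<lambda>v. \<sigma> - {v}) ` \<sigma> else {})"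

definition bd :: "'v set set \<Rightarrow> 'v set set" where
  "bd c = {\<tau>. odd (card {\<sigma>\<in>c. \<tau> \<in> bd_simplex \<sigma>})}"

definition cycles :: "nat \<Rightarrow> 'v set set \<Rightarrow> 'v set set set" where
  "cycles k K = {c \<in> chains k K. bd c = {}}"

definition boundaries :: "nat \<Rightarrow> 'v set set \<Rightarrow> 'v set set set" where
  "boundaries k L = bd ` chains (Suc k) L"

text \<open>Dimension of a finite Z/2-vector space V (so card V = 2 ^ dim).\<close>
definition gf2_dim :: "'a set \<Rightarrow> nat" where
  "gf2_dim V = floor_log (card V)"

text \<open>Rank of the map H_k(K) -> H_k(L) induced by inclusion K in L:
  dim ((Z_k(K) + B_k(L)) / B_k(L)).\<close>
definition pers_rank :: "nat \<Rightarrow> 'v set set \<Rightarrow> 'v set set \<Rightarrow> nat" where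
  "pers_rank k K L = gf2_dim (set_plus2 (cycles k K) (boundaries k L)) - gf2_dim (boundaries k L)"

definition filt_at :: "'v monofilt \<Rightarrow> ereal \<Rightarrow> 'v set set" where
  "filt_at M a = (if a = \<infinity> then (\<Union>\<alpha>. snd M \<alpha>)
                  else if a = -\<infinity> then (\<Inter>\<alpha>. snd M \<alpha>)
                  else snd M (real_of_ereal a))"

definition rk :: "nat \<Rightarrow> 'v monofilt \<Rightarrow> ereal \<Rightarrow> ereal \<Rightarrow> int" where
  "rk k M a b = int (pers_rank k (filt_at M a) (filt_at M b))"

text \<open>Multiplicity of the point (b,d), b < d, in the degree-k persistence diagram,
  by inclusion-exclusion of the rank function:
  mu(b,d) = r(b+,d-) - r(b-,d-) - r(b+,d+) + r(b-,d+) for small eps > 0,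
  with the conventions r(b-, _) = 0 if b = -oo and r(_, d+) = 0 if d = +oo.\<close>
definition mult_expr :: "nat \<Rightarrow> 'v monofilt \<Rightarrow> ereal \<Rightarrow> ereal \<Rightarrow> real \<Rightarrow> int" where
  "mult_expr k M b d \<epsilon> =
     (let bp = (if b = -\<infinity> then -\<infinity> else b + ereal \<epsilon>);
          bm = b - ereal \<epsilon>;
          dm = (if d = \<infinity> then \<infinity> else d - ereal \<epsilon>);
          dp = d + ereal \<epsilon>;
          r = (\<lambda>x y. rk k M x y)
      in r bp dm
         - (if b = -\<infinity> then 0 else r bm dm)
         - (if d = \<infinity> then 0 else r bp dp)
         + (if b = -\<infinity> \<or> d = \<infinity> then 0 else r bm dp))"

definition multiplicity_pd :: "nat \<Rightarrow> 'v monofilt \<Rightarrow> ereal \<Rightarrow> ereal \<Rightarrow> nat" where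
  "multiplicity_pd k M b d =
     nat (THE m. eventually (\<lambda>\<epsilon>. mult_expr k M b d \<epsilon> = m) (at_right (0::real)))"

text \<open>The degree-k persistence diagram (off-diagonal points (b,d), b < d, with multiplicity).
  For mono-filtrations of finite complexes the support is finite.\<close>
definition pdiagram :: "nat \<Rightarrow> 'v monofilt \<Rightarrow> (ereal \<times> ereal) multiset" where
  "pdiagram k M = Abs_multiset (\<lambda>(b, d). if b < d then multiplicity_pd k M b d else 0)"

definition edist :: "ereal \<Rightarrow> ereal \<Rightarrow> ereal" where
  "edist x y = (if x = y then 0 else \<bar>x - y\<bar>)"

definition pt_dist :: "ereal \<times> ereal \<Rightarrow> ereal \<times> ereal \<Rightarrow> ereal" where
  "pt_dist p q = max (edist (fst p) (fst q)) (edist (snd p) (snd q))"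

text \<open>l-infinity distance of a point to the diagonal.\<close>
definition diag_dist :: "ereal \<times> ereal \<Rightarrow> ereal" where
  "diag_dist p = (snd p - fst p) / 2"

definition partial_matching ::
  "((ereal \<times> ereal) \<times> (ereal \<times> ereal)) multiset \<Rightarrow> (ereal \<times> ereal) multiset \<Rightarrow> (ereal \<times> ereal) multiset \<Rightarrow> bool" where
  "partial_matching Mt A B \<longleftrightarrow> image_mset fst Mt \<subseteq># A \<and> image_mset snd Mt \<subseteq># B"

definition matching_cost ::
  "((ereal \<times> ereal) \<times> (ereal \<times> ereal)) multiset \<Rightarrow> (ereal \<times> ereal) multiset \<Rightarrow> (ereal \<times> ereal) multiset \<Rightarrow> ereal" where
  "matching_cost Mt A B = Sup (insert 0
      ((\<lambda>(p, q). pt_dist p q) ` set_mset Mt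
       \<union> diag_dist ` set_mset (A - image_mset fst Mt)
       \<union> diag_dist ` set_mset (B - image_mset snd Mt)))"

definition bottleneck :: "(ereal \<times> ereal) multiset \<Rightarrow> (ereal \<times> ereal) multiset \<Rightarrow> ereal" where
  "bottleneck A B = (INF Mt \<in> {Mt. partial_matching Mt A B}. matching_cost Mt A B)"

definition d_B :: "'v monofilt \<Rightarrow> 'v monofilt \<Rightarrow> ereal" where
  "d_B M N = (SUP k. bottleneck (pdiagram k M) (pdiagram k N))"

definition Delta1 :: "(real \<times> real) set" where
  "Delta1 = {x. fst x < snd x}"

definition feature_map :: "('v monofilt \<Rightarrow> real \<times> real \<Rightarrow> real) \<Rightarrow> bool" where
  "feature_map \<phi> \<longleftrightarrow> (\<forall>M. mono_filtration M \<longrightarrow>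
      set_borel_measurable lborel Delta1 (\<phi> M) \<and> set_integrable lborel Delta1 (\<lambda>x. (\<phi> M x)\<^sup>2))"

definition absolutely_bounded :: "('v monofilt \<Rightarrow> real \<times> real \<Rightarrow> real) \<Rightarrow> bool" where
  "absolutely_bounded \<phi> \<longleftrightarrow> (\<exists>v1>0. \<forall>M x. mono_filtration M \<and> x \<in> Delta1 \<longrightarrow>
      0 \<le> \<phi> M x \<and> \<phi> M x \<le> v1 * real (mf_size M))"

definition internally_stable :: "('v monofilt \<Rightarrow> real \<times> real \<Rightarrow> real) \<Rightarrow> bool" where
  "internally_stable \<phi> \<longleftrightarrow> (\<exists>v3>0. \<forall>M N n x.
      mono_filtration M \<and> mono_filtration N \<and> mf_size M = n \<and> mf_size N = n \<and> x \<in> Delta1 \<longrightarrow>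
      ereal \<bar>\<phi> M x - \<phi> N x\<bar> \<le> ereal (v3 * real n) * d_B M N)"

definition monotone_filter :: "'v set set \<Rightarrow> ('v set \<Rightarrow> real \<times> real) \<Rightarrow> bool" where
  "monotone_filter K F \<longleftrightarrow> (\<forall>\<sigma>\<in>K. \<forall>\<tau>\<in>K. \<tau> \<subseteq> \<sigma> \<longrightarrow> vle (F \<tau>) (F \<sigma>))"

definition sublevel_bifilt :: "'v set set \<Rightarrow> ('v set \<Rightarrow> real \<times> real) \<Rightarrow> real \<times> real \<Rightarrow> 'v set set" where
  "sublevel_bifilt K F p = {\<sigma>\<in>K. vle (F \<sigma>) p}"

definition sup_dist :: "'v set set \<Rightarrow> ('v set \<Rightarrow> real \<times> real) \<Rightarrow> ('v set \<Rightarrow> real \<times> real) \<Rightarrow> real" where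
  "sup_dist K F G = Max (insert 0 ((\<lambda>\<sigma>. max \<bar>fst (F \<sigma>) - fst (G \<sigma>)\<bar> \<bar>snd (F \<sigma>) - snd (G \<sigma>)\<bar>) ` K))"

text \<open>For p < q: the unit (Euclidean) direction a of the line through p and q, the point b
  where it meets x = -y, and the parameters lambda_p < lambda_q with p = b + lambda_p a,
  q = b + lambda_q a.\<close>
definition line_dir :: "real \<times> real \<Rightarrow> real \<times> real \<Rightarrow> real \<times> real" where
  "line_dir p q = (1 / norm (q - p)) *\<^sub>R (q - p)"

definition line_lam_p :: "real \<times> real \<Rightarrow> real \<times> real \<Rightarrow> real" where
  "line_lam_p p q = (fst p + snd p) / (fst (line_dir p q) + snd (line_dir p q))"

definition line_lam_q :: "real \<times> real \<Rightarrow> real \<times> real \<Rightarrow> real" where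
  "line_lam_q p q = line_lam_p p q + norm (q - p)"

definition line_base :: "real \<times> real \<Rightarrow> real \<times> real \<Rightarrow> real \<times> real" where
  "line_base p q = p - line_lam_p p q *\<^sub>R line_dir p q"

definition line_hat :: "real \<times> real \<Rightarrow> real \<times> real \<Rightarrow> real" where
  "line_hat p q = min (fst (line_dir p q)) (snd (line_dir p q))"

definition slice :: "'v set set \<Rightarrow> (real \<times> real \<Rightarrow> 'v set set) \<Rightarrow> real \<times> real \<Rightarrow> real \<times> real \<Rightarrow> 'v monofilt" where
  "slice K B p q = (K, \<lambda>\<alpha>. B (line_base p q + \<alpha> *\<^sub>R line_dir p q))"

definition Delta2 :: "((real \<times> real) \<times> (real \<times> real)) set" where
  "Delta2 = {z. vlt (fst z) (snd z)}"

definition Phi :: "('v monofilt \<Rightarrow> real \<times> real \<Rightarrow> real) \<Rightarrow> (real \<times> real) set \<Rightarrow> 'v set set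
    \<Rightarrow> (real \<times> real \<Rightarrow> 'v set set) \<Rightarrow> (real \<times> real) \<times> (real \<times> real) \<Rightarrow> real" where
  "Phi \<phi> R K B z = (let p = fst z; q = snd z in
      indicator R p * indicator R q * line_hat p q *
      \<phi> (slice K B p q) (line_lam_p p q, line_lam_q p q))"

definition L2_dist_sq :: "(((real \<times> real) \<times> (real \<times> real)) \<Rightarrow> real) \<Rightarrow> (((real \<times> real) \<times> (real \<times> real)) \<Rightarrow> real) \<Rightarrow> ennreal" where
  "L2_dist_sq f g = (\<integral>\<^sup>+ z \<in> Delta2. ennreal ((f z - g z)\<^sup>2) \<partial>lborel)"

end

theory Submission
  imports Defs
begin


lemma symdiff_comm: "symdiff a b = symdiff b a" unfolding symdiff_def by blast
lemma symdiff_assoc: "symdiff (symdiff a b) c = symdiff a (symdiff b c)" unfolding symdiff_def by blast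
lemma symdiff_self[simp]: "symdiff a a = {}" unfolding symdiff_def by blast
lemma symdiff_empty1[simp]: "symdiff {} a = a" unfolding symdiff_def by blast
lemma symdiff_empty2[simp]: "symdiff a {} = a" unfolding symdiff_def by blast
lemma symdiff_cancel[simp]: "symdiff a (symdiff a b) = b" unfolding symdiff_def by blast
lemma symdiff_cancel2[simp]: "symdiff (symdiff b a) a = b" unfolding symdiff_def by blast
lemma symdiff_sub: "a \<subseteq> U \<Longrightarrow> b \<subseteq> U \<Longrightarrow> symdiff a b \<subseteq> U" unfolding symdiff_def by blast
lemma symdiff_shift: "symdiff (symdiff a i) (symdiff b i) = symdiff a b"
  unfolding symdiff_def by blast
lemma symdiff_lcancel: "symdiff a b = symdiff a c \<Longrightarrow> b = c"
  by (metis symdiff_cancel)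
lemma symdiff_swap: "symdiff a b = symdiff c d \<Longrightarrow> symdiff a c = symdiff b d"
  unfolding symdiff_def set_eq_iff by blast
lemma symdiff_eq_iff: "symdiff a b = c \<longleftrightarrow> b = symdiff a c" unfolding symdiff_def by blast

definition grp :: "'a set set \<Rightarrow> bool" where
  "grp H \<longleftrightarrow> {} \<in> H \<and> (\<forall>a\<in>H. \<forall>b\<in>H. symdiff a b \<in> H)"

lemma grpD: "grp H \<Longrightarrow> {} \<in> H" "grp H \<Longrightarrow> a \<in> H \<Longrightarrow> b \<in> H \<Longrightarrow> symdiff a b \<in> H"
  unfolding grp_def by auto

lemma grp_Int: "grp H \<Longrightarrow> grp J \<Longrightarrow> grp (H \<inter> J)" unfolding grp_def by auto

lemma grp_Pow: "grp (Pow U)" unfolding grp_def symdiff_def by auto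

lemma grp_pair: "grp {{}, x}" unfolding grp_def by auto

lemma sp_memI: "u \<in> H \<Longrightarrow> v \<in> J \<Longrightarrow> symdiff u v \<in> set_plus2 H J"
  unfolding set_plus2_def by blast
lemma sp_memE: assumes "x \<in> set_plus2 H J" obtains u v where "x = symdiff u v" "u \<in> H" "v \<in> J"
  using assms unfolding set_plus2_def by blast

lemma sp_grp: assumes "grp H" "grp J" shows "grp (set_plus2 H J)"
proof -
  have e: "{} \<in> set_plus2 H J" unfolding set_plus2_def using assms grpD(1)[of H] grpD(1)[of J]
    by (intro CollectI exI[of _ "{}"]) simp
  have c: "symdiff a b \<in> set_plus2 H J" if a1: "a \<in> set_plus2 H J" and b1: "b \<in> set_plus2 H J" for a b
  proof -
    obtain u v where uv: "a = symdiff u v" "u \<in> H" "v \<in> J" using sp_memE[OF a1] by metis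
    obtain u' v' where uv': "b = symdiff u' v'" "u' \<in> H" "v' \<in> J" using sp_memE[OF b1] by metis
    have "symdiff a b = symdiff (symdiff u u') (symdiff v v')"
      unfolding uv uv' symdiff_def by blast
    moreover have "symdiff u u' \<in> H" "symdiff v v' \<in> J" using assms uv uv' grpD(2) by blast+
    ultimately show ?thesis using sp_memI by metis
  qed
  show ?thesis unfolding grp_def using e c by blast
qed

lemma sp_sub1: "grp J \<Longrightarrow> H \<subseteq> set_plus2 H J"
proof
  fix x assume "grp J" "x \<in> H"
  hence "x = symdiff x {} \<and> x \<in> H \<and> {} \<in> J" using grpD(1) by auto
  thus "x \<in> set_plus2 H J" unfolding set_plus2_def by blast
qed
lemma sp_sub2: "grp H \<Longrightarrow> J \<subseteq> set_plus2 H J"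
proof
  fix x assume "grp H" "x \<in> J"
  hence "x = symdiff {} x \<and> {} \<in> H \<and> x \<in> J" using grpD(1) by auto
  thus "x \<in> set_plus2 H J" unfolding set_plus2_def by blast
qed
lemma sp_mono: "H \<subseteq> H' \<Longrightarrow> J \<subseteq> J' \<Longrightarrow> set_plus2 H J \<subseteq> set_plus2 H' J'"
  unfolding set_plus2_def by blast
lemma sp_absorb: "grp H \<Longrightarrow> grp J \<Longrightarrow> J \<subseteq> H \<Longrightarrow> set_plus2 H J = H"
proof (rule antisym)
  assume a: "grp H" "grp J" "J \<subseteq> H"
  show "set_plus2 H J \<subseteq> H" unfolding set_plus2_def using a grpD(2)[of H] by blast
  show "H \<subseteq> set_plus2 H J" using sp_sub1 a by blast
qed
lemma sp_assoc: "set_plus2 (set_plus2 A B) C = set_plus2 A (set_plus2 B C)"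
proof (intro set_eqI iffI)
  fix x assume "x \<in> set_plus2 (set_plus2 A B) C"
  then obtain y c a b where "x = symdiff y c" "y = symdiff a b" "a \<in> A" "b \<in> B" "c \<in> C"
    by (metis sp_memE)
  thus "x \<in> set_plus2 A (set_plus2 B C)" by (metis sp_memI symdiff_assoc)
next
  fix x assume "x \<in> set_plus2 A (set_plus2 B C)"
  then obtain y c a b where "x = symdiff a y" "y = symdiff b c" "a \<in> A" "b \<in> B" "c \<in> C"
    by (metis sp_memE)
  thus "x \<in> set_plus2 (set_plus2 A B) C" by (metis sp_memI symdiff_assoc)
qed
lemma sp_comm1: "x \<in> set_plus2 A B \<Longrightarrow> x \<in> set_plus2 B A"
  by (metis sp_memE sp_memI symdiff_comm)
lemma sp_comm: "set_plus2 A B = set_plus2 B A"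
  using sp_comm1 by blast

lemma sp_finite: "finite H \<Longrightarrow> finite J \<Longrightarrow> finite (set_plus2 H J)"
proof -
  assume "finite H" "finite J"
  have "set_plus2 H J = (\<lambda>p. symdiff (fst p) (snd p)) ` (H \<times> J)" unfolding set_plus2_def by force
  thus ?thesis using \<open>finite H\<close> \<open>finite J\<close> by simp
qed
lemma sp_Pow: "H \<subseteq> Pow U \<Longrightarrow> J \<subseteq> Pow U \<Longrightarrow> set_plus2 H J \<subseteq> Pow U"
  unfolding set_plus2_def symdiff_def by blast

lemma card_sp_mult:
  assumes H: "grp H" "finite H" and J: "grp J" "finite J"
  shows "card (set_plus2 H J) * card (H \<inter> J) = card H * card J"
proof -
  define r where "r s = (SOME p. p \<in> H \<times> J \<and> symdiff (fst p) (snd p) = s)" for s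
  have r: "r s \<in> H \<times> J \<and> symdiff (fst (r s)) (snd (r s)) = s" if s1: "s \<in> set_plus2 H J" for s
  proof -
    obtain u v where "s = symdiff u v" "u \<in> H" "v \<in> J" using sp_memE[OF s1] by metis
    hence "\<exists>p. p \<in> H \<times> J \<and> symdiff (fst p) (snd p) = s" by auto
    thus ?thesis unfolding r_def by (rule someI_ex)
  qed
  define \<Phi> where "\<Phi> q = (symdiff (fst (r (fst q))) (snd q), symdiff (snd (r (fst q))) (snd q))" for q
  have "bij_betw \<Phi> (set_plus2 H J \<times> (H \<inter> J)) (H \<times> J)"
    unfolding bij_betw_def
  proof (intro conjI)
    show "inj_on \<Phi> (set_plus2 H J \<times> (H \<inter> J))"
    proof (rule inj_onI)
      fix x y assume x: "x \<in> set_plus2 H J \<times> (H \<inter> J)" and y: "y \<in> set_plus2 H J \<times> (H \<inter> J)"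
        and e: "\<Phi> x = \<Phi> y"
      obtain s i where xs: "x = (s, i)" by (cases x)
      obtain s' i' where ys: "y = (s', i')" by (cases y)
      have sx: "s \<in> set_plus2 H J" using x unfolding xs by simp
      have sy: "s' \<in> set_plus2 H J" using y unfolding ys by simp
      have rs: "symdiff (fst (r s)) (snd (r s)) = s" using r[OF sx] by blast
      have rs': "symdiff (fst (r s')) (snd (r s')) = s'" using r[OF sy] by blast
      have e1: "symdiff (fst (r s)) i = symdiff (fst (r s')) i'"
        and e2: "symdiff (snd (r s)) i = symdiff (snd (r s')) i'" using e unfolding \<Phi>_def xs ys by auto
      have "s = symdiff (symdiff (fst (r s)) i) (symdiff (snd (r s)) i)"
        by (simp add: symdiff_shift rs)
      also have "\<dots> = symdiff (symdiff (fst (r s')) i') (symdiff (snd (r s')) i')" using e1 e2 by simp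
      also have "\<dots> = s'" by (simp add: symdiff_shift rs')
      finally have ss: "s = s'" .
      have "i = i'" using e1 unfolding ss by (rule symdiff_lcancel)
      thus "x = y" using ss xs ys by simp
    qed
  next
    show "\<Phi> ` (set_plus2 H J \<times> (H \<inter> J)) = H \<times> J"
    proof (rule subset_antisym; rule subsetI)
      fix p assume "p \<in> \<Phi> ` (set_plus2 H J \<times> (H \<inter> J))"
      then obtain s i where si: "s \<in> set_plus2 H J" "i \<in> H \<inter> J" "p = \<Phi> (s, i)" by auto
      have "fst (r s) \<in> H" "snd (r s) \<in> J" using r[OF si(1)] by auto
      hence "symdiff (fst (r s)) i \<in> H" "symdiff (snd (r s)) i \<in> J"
        using si(2) grpD(2)[OF H(1)] grpD(2)[OF J(1)] by auto
      thus "p \<in> H \<times> J" unfolding si(3) \<Phi>_def by simp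
    next
      fix p assume p: "p \<in> H \<times> J"
      obtain h j where hj: "p = (h, j)" "h \<in> H" "j \<in> J" using p by auto
      define s where "s = symdiff h j"
      have s: "s \<in> set_plus2 H J" unfolding s_def using hj sp_memI by metis
      have rs: "symdiff (fst (r s)) (snd (r s)) = s" "fst (r s) \<in> H" "snd (r s) \<in> J" using r[OF s] by auto
      define i where "i = symdiff (fst (r s)) h"
      have iH: "i \<in> H" unfolding i_def by (rule grpD(2)[OF H(1) rs(2) hj(2)])
      have i2: "i = symdiff (snd (r s)) j" using rs(1) unfolding i_def s_def by (rule symdiff_swap)
      have iJ: "i \<in> J" unfolding i2 by (rule grpD(2)[OF J(1) rs(3) hj(3)])
      have f1: "symdiff (fst (r s)) i = h" unfolding i_def by simp
      have f2: "symdiff (snd (r s)) i = j" unfolding i2 by simp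
      have "\<Phi> (s, i) = p" unfolding \<Phi>_def hj(1) using f1 f2 by simp
      thus "p \<in> \<Phi> ` (set_plus2 H J \<times> (H \<inter> J))" using s iH iJ by force
    qed
  qed
  hence "card (set_plus2 H J \<times> (H \<inter> J)) = card (H \<times> J)" by (rule bij_betw_same_card)
  thus ?thesis by (simp only: card_cartesian_product)
qed

lemma grp_card_pow2:
  assumes U: "finite U" and H: "grp H" "H \<subseteq> Pow U"
  shows "\<exists>m. card H = 2 ^ m"
proof -
  have "\<forall>H. grp H \<and> H \<subseteq> Pow U \<and> card (Pow U - H) = n \<longrightarrow> (\<exists>m. card H = 2 ^ m)" for n
  proof (induction n rule: less_induct)
    case (less n)
    show ?case
    proof (intro allI impI)
      fix H assume a: "grp H \<and> H \<subseteq> Pow U \<and> card (Pow U - H) = n"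
      have fH: "finite H" using a U finite_subset by (metis finite_Pow_iff)
      show "\<exists>m. card H = 2 ^ m"
      proof (cases "H = Pow U")
        case True thus ?thesis using U by (simp add: card_Pow)
      next
        case False
        then obtain x where x: "x \<in> Pow U" "x \<notin> H" using a by blast
        define H' where "H' = set_plus2 H {{}, x}"
        have g': "grp H'" unfolding H'_def using a grp_pair sp_grp by blast
        have s': "H' \<subseteq> Pow U" unfolding H'_def using a x sp_Pow[of H U "{{},x}"] by auto
        have sub: "H \<subseteq> H'" unfolding H'_def using sp_sub1 grp_pair by blast
        have xH': "x \<in> H'" unfolding H'_def using sp_sub2[of H "{{},x}"] a by blast
        have "Pow U - H' \<subseteq> Pow U - H" using sub by blast
        moreover have "x \<in> (Pow U - H) - (Pow U - H')" using x xH' by blast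
        ultimately have "Pow U - H' \<subset> Pow U - H" by blast
        hence "card (Pow U - H') < card (Pow U - H)"
          using U by (intro psubset_card_mono) auto
        then obtain m where m: "card H' = 2 ^ m" using less.IH a g' s' by blast
        have x0: "x \<noteq> {}" using a x grpD(1) by blast
        have "H \<inter> {{}, x} = {{}}" using a x grpD(1) by blast
        moreover have "card {{}, x} = 2" using x0 by simp
        ultimately have "card H' * 1 = card H * 2" using card_sp_mult[of H "{{},x}"] a fH grp_pair[of x]
          unfolding H'_def by simp
        hence "2 ^ m = card H * 2" using m by simp
        moreover have "card H > 0" using fH a grpD(1) card_gt_0_iff by blast
        ultimately have "m \<noteq> 0" by (cases m) auto
        then obtain m' where "m = Suc m'" using not0_implies_Suc by blast
        hence "card H = 2 ^ m'" using \<open>2 ^ m = card H * 2\<close> by simp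
        thus ?thesis by blast
      qed
    qed
  qed
  thus ?thesis using H by blast
qed

lemma gf2_dim_pow: "card H = 2 ^ m \<Longrightarrow> gf2_dim H = m"
  unfolding gf2_dim_def by simp

lemma gf2_dim_mono: "finite J \<Longrightarrow> H \<subseteq> J \<Longrightarrow> gf2_dim H \<le> gf2_dim J"
proof -
  assume "finite J" "H \<subseteq> J"
  hence "card H \<le> card J" by (rule card_mono)
  thus ?thesis unfolding gf2_dim_def by (rule floor_log_le_iff)
qed

lemma gf2_dim_formula:
  assumes U: "finite U" and H: "grp H" "H \<subseteq> Pow U" and J: "grp J" "J \<subseteq> Pow U"
  shows "gf2_dim (set_plus2 H J) + gf2_dim (H \<inter> J) = gf2_dim H + gf2_dim J"
proof -
  have fP: "finite (Pow U)" using U by simp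
  have fH: "finite H" "finite J" using finite_subset[OF H(2) fP] finite_subset[OF J(2) fP] by blast+
  obtain a where a: "card H = 2 ^ a" using grp_card_pow2[OF U H] by blast
  obtain b where b: "card J = 2 ^ b" using grp_card_pow2[OF U J] by blast
  obtain c where c: "card (set_plus2 H J) = 2 ^ c" using grp_card_pow2[OF U sp_grp[OF H(1) J(1)] sp_Pow[OF H(2) J(2)]] by blast
  obtain d where d: "card (H \<inter> J) = 2 ^ d" using grp_card_pow2[OF U grp_Int[OF H(1) J(1)]] H(2) by blast
  have "(2::nat) ^ (c + d) = 2 ^ (a + b)" using card_sp_mult[OF H(1) fH(1) J(1) fH(2)] a b c d
    by (simp add: power_add)
  hence "c + d = a + b" by simp
  moreover have "gf2_dim H = a" "gf2_dim J = b" "gf2_dim (set_plus2 H J) = c" "gf2_dim (H \<inter> J) = d"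
    using a b c d gf2_dim_pow by blast+
  ultimately show ?thesis by simp
qed

lemma gf2_dim_ineq:
  assumes U: "finite U" and X: "grp X" "X \<subseteq> Pow U" and Y: "grp Y" "Y \<subseteq> Pow U"
    and W: "grp W" "W \<subseteq> Pow U" and XY: "X \<subseteq> Y"
  shows "int (gf2_dim (set_plus2 Y W)) - int (gf2_dim (set_plus2 X W)) \<le> int (gf2_dim Y) - int (gf2_dim X)"
proof -
  have "gf2_dim (X \<inter> W) \<le> gf2_dim (Y \<inter> W)"
  proof (rule gf2_dim_mono)
    have fP: "finite (Pow U)" using U by simp
    show "finite (Y \<inter> W)" using finite_subset[OF Y(2) fP] by blast
    show "X \<inter> W \<subseteq> Y \<inter> W" using XY by blast
  qed
  thus ?thesis using gf2_dim_formula[OF U X W] gf2_dim_formula[OF U Y W] by linarith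
qed

lemma card_symdiff_parity:
  assumes "finite A" "finite B"
  shows "odd (card (symdiff A B)) \<longleftrightarrow> (odd (card A) \<noteq> odd (card B))"
proof -
  have "card A + card B = card (A \<union> B) + card (A \<inter> B)" using assms card_Un_Int by blast
  moreover have "A \<union> B = symdiff A B \<union> (A \<inter> B)" unfolding symdiff_def by blast
  moreover have "card (symdiff A B \<union> (A \<inter> B)) = card (symdiff A B) + card (A \<inter> B)"
    by (rule card_Un_disjoint) (use assms in \<open>auto simp: symdiff_def\<close>)
  ultimately have "card A + card B = card (symdiff A B) + 2 * card (A \<inter> B)" by simp
  thus ?thesis by presburger
qed

lemma bd_symdiff:
  assumes "finite c" "finite c'"
  shows "bd (symdiff c c') = symdiff (bd c) (bd c')"
proof (rule set_eqI)
  fix t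
  have e: "{s \<in> symdiff c c'. t \<in> bd_simplex s} = symdiff {s \<in> c. t \<in> bd_simplex s} {s \<in> c'. t \<in> bd_simplex s}"
    unfolding symdiff_def by blast
  have "odd (card {s \<in> symdiff c c'. t \<in> bd_simplex s}) \<longleftrightarrow>
        (odd (card {s \<in> c. t \<in> bd_simplex s}) \<noteq> odd (card {s \<in> c'. t \<in> bd_simplex s}))"
    unfolding e by (rule card_symdiff_parity) (use assms in auto)
  thus "t \<in> bd (symdiff c c') \<longleftrightarrow> t \<in> symdiff (bd c) (bd c')"
    unfolding bd_def symdiff_def by auto
qed

lemma bd_empty[simp]: "bd {} = {}" unfolding bd_def by simp

lemma ksimplices_finite: "finite K \<Longrightarrow> finite (ksimplices k K)"
  unfolding ksimplices_def by simp

lemma grp_chains: "grp (chains k X)" unfolding chains_def by (rule grp_Pow)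

lemma grp_cycles: assumes "finite X" shows "grp (cycles k X)"
  unfolding grp_def
proof (intro conjI ballI)
  show "{} \<in> cycles k X" unfolding cycles_def chains_def by simp
  fix a b assume a: "a \<in> cycles k X" and b: "b \<in> cycles k X"
  have fa: "finite a" "finite b" using a b ksimplices_finite[OF assms] unfolding cycles_def chains_def
    by (auto intro: finite_subset)
  have "bd (symdiff a b) = {}" using a b bd_symdiff[OF fa] unfolding cycles_def by simp
  moreover have "symdiff a b \<in> chains k X" using a b grpD(2)[OF grp_chains] unfolding cycles_def by blast
  ultimately show "symdiff a b \<in> cycles k X" unfolding cycles_def by blast
qed

lemma grp_boundaries: assumes "finite X" shows "grp (boundaries k X)"
  unfolding grp_def
proof (intro conjI ballI)
  show "{} \<in> boundaries k X" unfolding boundaries_def chains_def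
    by (metis Pow_bottom bd_empty image_eqI)
  fix a b assume a: "a \<in> boundaries k X" and b: "b \<in> boundaries k X"
  obtain c where c: "a = bd c" "c \<in> chains (Suc k) X" using a unfolding boundaries_def by blast
  obtain c' where c': "b = bd c'" "c' \<in> chains (Suc k) X" using b unfolding boundaries_def by blast
  have fa: "finite c" "finite c'" using c c' ksimplices_finite[OF assms] unfolding chains_def
    by (auto intro: finite_subset)
  have "symdiff a b = bd (symdiff c c')" using bd_symdiff[OF fa] c c' by simp
  moreover have "symdiff c c' \<in> chains (Suc k) X" using c c' grpD(2)[OF grp_chains] by blast
  ultimately show "symdiff a b \<in> boundaries k X" unfolding boundaries_def by blast
qed

lemma cycles_mono: "A' \<subseteq> A \<Longrightarrow> cycles k A' \<subseteq> cycles k A"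
  unfolding cycles_def chains_def ksimplices_def by blast

lemma boundaries_mono: "B' \<subseteq> B \<Longrightarrow> boundaries k B' \<subseteq> boundaries k B"
  unfolding boundaries_def chains_def ksimplices_def by blast

lemma cycles_sub: "A \<subseteq> K \<Longrightarrow> cycles k A \<subseteq> Pow (ksimplices k K)"
  unfolding cycles_def chains_def ksimplices_def by blast

lemma bd_sub:
  assumes K: "fin_simplicial_complex K" and c: "c \<subseteq> ksimplices (Suc k) K"
  shows "bd c \<subseteq> ksimplices k K"
proof
  fix t assume "t \<in> bd c"
  hence o: "odd (card {s \<in> c. t \<in> bd_simplex s})" unfolding bd_def by simp
  hence "{s \<in> c. t \<in> bd_simplex s} \<noteq> {}" by (metis card.empty even_zero)
  then obtain s where s: "s \<in> c" "t \<in> bd_simplex s" by blast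
  have sK: "s \<in> K" "card s = Suc (Suc k)" using s c unfolding ksimplices_def by auto
  have fs: "finite s" using K sK unfolding fin_simplicial_complex_def by blast
  obtain v where v: "v \<in> s" "t = s - {v}" using s(2) sK(2) unfolding bd_simplex_def by auto
  have ct: "card t = Suc k" using v fs sK(2) by simp
  hence "t \<noteq> {}" by auto
  moreover have "t \<subseteq> s" using v by blast
  ultimately have "t \<in> K" using K sK fs unfolding fin_simplicial_complex_def by blast
  thus "t \<in> ksimplices k K" unfolding ksimplices_def using ct by simp
qed

lemma boundaries_sub:
  assumes K: "fin_simplicial_complex K" and L: "L \<subseteq> K"
  shows "boundaries k L \<subseteq> Pow (ksimplices k K)"
proof
  fix b assume "b \<in> boundaries k L"
  then obtain c where c: "b = bd c" "c \<subseteq> ksimplices (Suc k) L" unfolding boundaries_def chains_def by blast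
  have "c \<subseteq> ksimplices (Suc k) K" using c L unfolding ksimplices_def by blast
  thus "b \<in> Pow (ksimplices k K)" using bd_sub[OF K] c by blast
qed

lemma fsc_finite: "fin_simplicial_complex K \<Longrightarrow> finite K"
  unfolding fin_simplicial_complex_def by blast

lemma pr_int:
  assumes K: "fin_simplicial_complex K" and A: "A \<subseteq> K" and B: "B \<subseteq> K"
  shows "int (pers_rank k A B) = int (gf2_dim (set_plus2 (cycles k A) (boundaries k B))) - int (gf2_dim (boundaries k B))"
proof -
  have fK: "finite K" using K by (rule fsc_finite)
  have U: "finite (ksimplices k K)" using fK by (rule ksimplices_finite)
  have fA: "finite A" "finite B" by (rule finite_subset[OF A fK], rule finite_subset[OF B fK])
  have "gf2_dim (boundaries k B) \<le> gf2_dim (set_plus2 (cycles k A) (boundaries k B))"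
  proof (rule gf2_dim_mono)
    have "set_plus2 (cycles k A) (boundaries k B) \<subseteq> Pow (ksimplices k K)"
      by (rule sp_Pow[OF cycles_sub[OF A] boundaries_sub[OF K B]])
    moreover have "finite (Pow (ksimplices k K))" using U by simp
    ultimately show "finite (set_plus2 (cycles k A) (boundaries k B))" by (rule finite_subset)
    show "boundaries k B \<subseteq> set_plus2 (cycles k A) (boundaries k B)"
      by (rule sp_sub2) (rule grp_cycles[OF fA(1)])
  qed
  thus ?thesis unfolding pers_rank_def by simp
qed

lemma pr_empty: fixes B :: "'v set set" shows "pers_rank k {} B = 0"
proof -
  have "cycles k ({}::'v set set) = {{}}" unfolding cycles_def chains_def ksimplices_def by auto
  moreover have "set_plus2 {{}} (boundaries k B) = boundaries k B" unfolding set_plus2_def by auto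
  ultimately show ?thesis unfolding pers_rank_def by simp
qed

lemma pr_mono:
  assumes K: "fin_simplicial_complex K" and A: "A' \<subseteq> A" "A \<subseteq> K" and B: "B \<subseteq> K"
  shows "pers_rank k A' B \<le> pers_rank k A B"
proof -
  have fK: "finite K" using K by (rule fsc_finite)
  have U: "finite (ksimplices k K)" using fK by (rule ksimplices_finite)
  have "set_plus2 (cycles k A) (boundaries k B) \<subseteq> Pow (ksimplices k K)"
    by (rule sp_Pow[OF cycles_sub[OF A(2)] boundaries_sub[OF K B]])
  moreover have "finite (Pow (ksimplices k K))" using U by simp
  ultimately have f: "finite (set_plus2 (cycles k A) (boundaries k B))" by (rule finite_subset)
  have "gf2_dim (set_plus2 (cycles k A') (boundaries k B)) \<le> gf2_dim (set_plus2 (cycles k A) (boundaries k B))"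
    by (rule gf2_dim_mono[OF f]) (intro sp_mono cycles_mono A order_refl)
  thus ?thesis unfolding pers_rank_def by simp
qed

lemma int_aux: "(yA::int) - yA' \<le> xA - xA' \<Longrightarrow> p1 = xA - b' \<Longrightarrow> p2 = xA' - b' \<Longrightarrow> p3 = yA - b \<Longrightarrow> p4 = yA' - b \<Longrightarrow> 0 \<le> p1 - p2 - p3 + p4"
  by simp

lemma pr_ineq:
  assumes K: "fin_simplicial_complex K" and A: "A' \<subseteq> A" "A \<subseteq> K" and B: "B' \<subseteq> B" "B \<subseteq> K"
  shows "int (pers_rank k A B') - int (pers_rank k A' B') - int (pers_rank k A B) + int (pers_rank k A' B) \<ge> 0"
proof -
  have fK: "finite K" using K by (rule fsc_finite)
  have U: "finite (ksimplices k K)" using fK by (rule ksimplices_finite)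
  have fA1: "finite A" using finite_subset[OF A(2) fK] .
  have fB1: "finite B" using finite_subset[OF B(2) fK] .
  have fA: "finite A" "finite A'" "finite B" "finite B'"
    by (rule fA1, rule finite_subset[OF A(1) fA1], rule fB1, rule finite_subset[OF B(1) fB1])
  define ZA where "ZA = cycles k A"
  define ZA' where "ZA' = cycles k A'"
  define BB where "BB = boundaries k B"
  define BB' where "BB' = boundaries k B'"
  have g: "grp ZA" "grp ZA'" "grp BB" "grp BB'" unfolding ZA_def ZA'_def BB_def BB'_def
    by (rule grp_cycles[OF fA(1)], rule grp_cycles[OF fA(2)], rule grp_boundaries[OF fA(3)], rule grp_boundaries[OF fA(4)])
  have s: "ZA \<subseteq> Pow (ksimplices k K)" "ZA' \<subseteq> Pow (ksimplices k K)"
    "BB \<subseteq> Pow (ksimplices k K)" "BB' \<subseteq> Pow (ksimplices k K)"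
    unfolding ZA_def ZA'_def BB_def BB'_def
    using cycles_sub[OF A(2)] cycles_sub[OF order_trans[OF A(1) A(2)]]
      boundaries_sub[OF K B(2)] boundaries_sub[OF K order_trans[OF B(1) B(2)]] by blast+
  have Y: "grp (set_plus2 ZA BB')" "set_plus2 ZA BB' \<subseteq> Pow (ksimplices k K)"
    by (rule sp_grp, (rule g)+, rule sp_Pow, (rule s)+)
  have X: "grp (set_plus2 ZA' BB')" "set_plus2 ZA' BB' \<subseteq> Pow (ksimplices k K)"
    by (rule sp_grp, (rule g)+, rule sp_Pow, (rule s)+)
  have XY: "set_plus2 ZA' BB' \<subseteq> set_plus2 ZA BB'"
    unfolding ZA_def ZA'_def by (intro sp_mono cycles_mono A order_refl)
  have BB'BB: "BB' \<subseteq> BB" unfolding BB_def BB'_def by (rule boundaries_mono[OF B(1)])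
  have ab: "set_plus2 BB' BB = BB" using sp_comm[of BB' BB] sp_absorb[OF g(3) g(4) BB'BB] by simp
  have e1: "set_plus2 (set_plus2 ZA BB') BB = set_plus2 ZA BB"
    unfolding sp_assoc ab ..
  have e2: "set_plus2 (set_plus2 ZA' BB') BB = set_plus2 ZA' BB"
    unfolding sp_assoc ab ..
  have "int (gf2_dim (set_plus2 (set_plus2 ZA BB') BB)) - int (gf2_dim (set_plus2 (set_plus2 ZA' BB') BB))
        \<le> int (gf2_dim (set_plus2 ZA BB')) - int (gf2_dim (set_plus2 ZA' BB'))"
    by (rule gf2_dim_ineq[OF U X Y g(3) s(3) XY])
  hence "int (gf2_dim (set_plus2 ZA BB)) - int (gf2_dim (set_plus2 ZA' BB))
        \<le> int (gf2_dim (set_plus2 ZA BB')) - int (gf2_dim (set_plus2 ZA' BB'))" unfolding e1 e2 .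
  moreover have "int (pers_rank k A B') = int (gf2_dim (set_plus2 ZA BB')) - int (gf2_dim BB')"
    unfolding ZA_def BB'_def by (rule pr_int[OF K A(2) order_trans[OF B(1) B(2)]])
  moreover have "int (pers_rank k A' B') = int (gf2_dim (set_plus2 ZA' BB')) - int (gf2_dim BB')"
    unfolding ZA'_def BB'_def by (rule pr_int[OF K order_trans[OF A(1) A(2)] order_trans[OF B(1) B(2)]])
  moreover have "int (pers_rank k A B) = int (gf2_dim (set_plus2 ZA BB)) - int (gf2_dim BB)"
    unfolding ZA_def BB_def by (rule pr_int[OF K A(2) B(2)])
  moreover have "int (pers_rank k A' B) = int (gf2_dim (set_plus2 ZA' BB)) - int (gf2_dim BB)"
    unfolding ZA'_def BB_def by (rule pr_int[OF K order_trans[OF A(1) A(2)] B(2)])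
  ultimately show ?thesis by (rule int_aux)
qed



definition subl :: "'v set set \<Rightarrow> ('v set \<Rightarrow> real) \<Rightarrow> 'v monofilt" where
  "subl K f = (K, \<lambda>\<alpha>. {\<sigma>\<in>K. f \<sigma> \<le> \<alpha>})"
definition Le :: "'v set set \<Rightarrow> ('v set \<Rightarrow> real) \<Rightarrow> ereal \<Rightarrow> 'v set set" where
  "Le K f x = {\<sigma>\<in>K. ereal (f \<sigma>) \<le> x}"
definition Lt :: "'v set set \<Rightarrow> ('v set \<Rightarrow> real) \<Rightarrow> ereal \<Rightarrow> 'v set set" where
  "Lt K f x = {\<sigma>\<in>K. ereal (f \<sigma>) < x}"

definition mu :: "nat \<Rightarrow> 'v set set \<Rightarrow> ('v set \<Rightarrow> real) \<Rightarrow> ereal \<Rightarrow> ereal \<Rightarrow> int" where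
  "mu k K f b d = (if b < d \<and> b \<noteq> -\<infinity> then
     (if d = \<infinity> then int (pers_rank k (Le K f b) K) - int (pers_rank k (Lt K f b) K)
      else int (pers_rank k (Le K f b) (Lt K f d)) - int (pers_rank k (Lt K f b) (Lt K f d))
         - int (pers_rank k (Le K f b) (Le K f d)) + int (pers_rank k (Lt K f b) (Le K f d)))
     else 0)"

lemma Le_inf[simp]: "Le K f \<infinity> = K" unfolding Le_def by simp
lemma Le_minf[simp]: "Le K f (-\<infinity>) = {}" unfolding Le_def by simp
lemma Le_sub: "Le K f x \<subseteq> K" unfolding Le_def by blast
lemma Lt_sub: "Lt K f x \<subseteq> K" unfolding Lt_def by blast
lemma Lt_Le: "Lt K f x \<subseteq> Le K f x" unfolding Lt_def Le_def by auto

lemma filt_at_subl: "filt_at (subl K f) x = Le K f x"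
proof -
  have inf: "(\<Union>\<alpha>. snd (subl K f) \<alpha>) = K" unfolding subl_def by auto
  have minf: "(\<Inter>\<alpha>. snd (subl K f) \<alpha>) = {}"
  proof (rule equals0I)
    fix s assume "s \<in> (\<Inter>\<alpha>. snd (subl K f) \<alpha>)"
    hence "s \<in> snd (subl K f) (f s - 1)" by blast
    thus False unfolding subl_def by simp
  qed
  show ?thesis
  proof (cases x)
    case (real r) thus ?thesis unfolding filt_at_def Le_def subl_def by simp
  next
    case PInf thus ?thesis unfolding filt_at_def using inf by simp
  next
    case MInf thus ?thesis unfolding filt_at_def using minf by simp
  qed
qed

lemma rk_subl: "rk k (subl K f) a b = int (pers_rank k (Le K f a) (Le K f b))"
  unfolding rk_def filt_at_subl ..

lemma ev_small: "0 < (c::real) \<Longrightarrow> eventually (\<lambda>\<epsilon>. 0 < \<epsilon> \<and> \<epsilon> < c) (at_right 0)"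
  using eventually_at_right_real[of 0 c] by simp

lemma ev_Le_plus:
  assumes fK: "finite K"
  shows "eventually (\<lambda>\<epsilon>. Le K f (ereal r + ereal \<epsilon>) = Le K f (ereal r)) (at_right 0)"
proof -
  have "\<forall>s\<in>K. eventually (\<lambda>\<epsilon>. (f s \<le> r + \<epsilon>) = (f s \<le> r)) (at_right 0)"
  proof
    fix s assume "s \<in> K"
    show "eventually (\<lambda>\<epsilon>. (f s \<le> r + \<epsilon>) = (f s \<le> r)) (at_right 0)"
    proof (cases "f s \<le> r")
      case True
      show ?thesis using ev_small[of 1] by (rule eventually_mono) (use True in auto)
    next
      case False
      hence "0 < f s - r" by simp
      show ?thesis using ev_small[OF \<open>0 < f s - r\<close>] by (rule eventually_mono) (use False in auto)
    qed
  qed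
  hence "eventually (\<lambda>\<epsilon>. \<forall>s\<in>K. (f s \<le> r + \<epsilon>) = (f s \<le> r)) (at_right 0)"
    by (rule eventually_ball_finite[OF fK])
  thus ?thesis by (rule eventually_mono) (auto simp: Le_def)
qed

lemma ev_Le_minus:
  assumes fK: "finite K"
  shows "eventually (\<lambda>\<epsilon>. Le K f (ereal r - ereal \<epsilon>) = Lt K f (ereal r)) (at_right 0)"
proof -
  have "\<forall>s\<in>K. eventually (\<lambda>\<epsilon>. (f s \<le> r - \<epsilon>) = (f s < r)) (at_right 0)"
  proof
    fix s assume "s \<in> K"
    show "eventually (\<lambda>\<epsilon>. (f s \<le> r - \<epsilon>) = (f s < r)) (at_right 0)"
    proof (cases "f s < r")
      case True
      hence "0 < r - f s" by simp
      show ?thesis using ev_small[OF \<open>0 < r - f s\<close>] by (rule eventually_mono) (use True in auto)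
    next
      case False
      show ?thesis using ev_small[of 1] by (rule eventually_mono) (use False in auto)
    qed
  qed
  hence "eventually (\<lambda>\<epsilon>. \<forall>s\<in>K. (f s \<le> r - \<epsilon>) = (f s < r)) (at_right 0)"
    by (rule eventually_ball_finite[OF fK])
  thus ?thesis by (rule eventually_mono) (auto simp: Le_def Lt_def)
qed

lemma ev_mult_expr:
  assumes fK: "finite K" and bd: "b < d"
  shows "eventually (\<lambda>\<epsilon>. mult_expr k (subl K f) b d \<epsilon> = mu k K f b d) (at_right 0)"
proof (cases b)
  case MInf
  have "mult_expr k (subl K f) b d \<epsilon> = mu k K f b d" for \<epsilon>
    unfolding mult_expr_def mu_def MInf Let_def rk_subl by (simp add: pr_empty)
  thus ?thesis by simp
next
  case PInf thus ?thesis using bd by simp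
next
  case (real r)
  show ?thesis
  proof (cases d)
    case MInf thus ?thesis using bd by simp
  next
    case PInf
    show ?thesis
      using ev_Le_plus[OF fK, of f r] ev_Le_minus[OF fK, of f r]
    proof eventually_elim
      case (elim \<epsilon>)
      show ?case unfolding mult_expr_def mu_def real PInf Let_def rk_subl using bd elim real PInf
        by simp
    qed
  next
    case (real s)
    show ?thesis
      using ev_Le_plus[OF fK, of f r] ev_Le_minus[OF fK, of f r] ev_Le_plus[OF fK, of f s] ev_Le_minus[OF fK, of f s]
    proof eventually_elim
      case (elim \<epsilon>)
      show ?case unfolding mult_expr_def mu_def \<open>b = ereal r\<close> real Let_def rk_subl using bd elim \<open>b = ereal r\<close> real
        by simp
    qed
  qed
qed

lemma mult_subl:
  assumes fK: "finite K" and bd: "b < d"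
  shows "multiplicity_pd k (subl K f) b d = nat (mu k K f b d)"
proof -
  have "(THE m. eventually (\<lambda>\<epsilon>. mult_expr k (subl K f) b d \<epsilon> = m) (at_right 0)) = mu k K f b d"
  proof (rule the_equality)
    show "eventually (\<lambda>\<epsilon>. mult_expr k (subl K f) b d \<epsilon> = mu k K f b d) (at_right 0)"
      by (rule ev_mult_expr[OF fK bd])
  next
    fix m assume "eventually (\<lambda>\<epsilon>. mult_expr k (subl K f) b d \<epsilon> = m) (at_right 0)"
    hence "eventually (\<lambda>\<epsilon>. mult_expr k (subl K f) b d \<epsilon> = m \<and> mult_expr k (subl K f) b d \<epsilon> = mu k K f b d) (at_right 0)"
      using ev_mult_expr[OF fK bd] by (rule eventually_conj)
    then obtain \<epsilon> where "mult_expr k (subl K f) b d \<epsilon> = m \<and> mult_expr k (subl K f) b d \<epsilon> = mu k K f b d"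
      using eventually_happens'[OF trivial_limit_at_right_real] by blast
    thus "m = mu k K f b d" by simp
  qed
  thus ?thesis unfolding multiplicity_pd_def by simp
qed

lemma mu_nonneg:
  assumes K: "fin_simplicial_complex K"
  shows "0 \<le> mu k K f b d"
proof -
  have "0 \<le> int (pers_rank k (Le K f b) (Lt K f d)) - int (pers_rank k (Lt K f b) (Lt K f d))
         - int (pers_rank k (Le K f b) (Le K f d)) + int (pers_rank k (Lt K f b) (Le K f d))"
    by (rule pr_ineq[OF K Lt_Le Le_sub Lt_Le Le_sub])
  moreover have "pers_rank k (Lt K f b) K \<le> pers_rank k (Le K f b) K"
    by (rule pr_mono[OF K Lt_Le Le_sub order_refl])
  ultimately show ?thesis unfolding mu_def by simp
qed

lemma mu_support:
  assumes "mu k K f b d \<noteq> 0"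
  shows "b \<in> ereal ` f ` K" "d \<in> insert \<infinity> (ereal ` f ` K)"
proof -
  have bd: "b < d" "b \<noteq> -\<infinity>" using assms unfolding mu_def by (auto split: if_splits)
  show "b \<in> ereal ` f ` K"
  proof (rule ccontr)
    assume nb: "b \<notin> ereal ` f ` K"
    have e: "Le K f b = Lt K f b" unfolding Le_def Lt_def
    proof (intro Collect_cong conj_cong refl)
      fix s assume "s \<in> K" hence "ereal (f s) \<noteq> b" using nb by blast
      thus "ereal (f s) \<le> b \<longleftrightarrow> ereal (f s) < b"
        by (metis order.not_eq_order_implies_strict order.strict_implies_order)
    qed
    have "mu k K f b d = 0" unfolding mu_def e by simp
    thus False using assms by simp
  qed
  show "d \<in> insert \<infinity> (ereal ` f ` K)"
  proof (rule ccontr)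
    assume nd: "d \<notin> insert \<infinity> (ereal ` f ` K)"
    have e: "Le K f d = Lt K f d" unfolding Le_def Lt_def
    proof (intro Collect_cong conj_cong refl)
      fix s assume "s \<in> K" hence "ereal (f s) \<noteq> d" using nd by blast
      thus "ereal (f s) \<le> d \<longleftrightarrow> ereal (f s) < d"
        by (metis order.not_eq_order_implies_strict order.strict_implies_order)
    qed
    have "mu k K f b d = 0" unfolding mu_def e using nd by simp
    thus False using assms by simp
  qed
qed

lemma count_pdiagram_subl:
  assumes K: "fin_simplicial_complex K"
  shows "count (pdiagram k (subl K f)) (b, d) = (if b < d then nat (mu k K f b d) else 0)"
proof -
  have fK: "finite K" using K by (rule fsc_finite)
  let ?g = "\<lambda>(b, d). if b < d then multiplicity_pd k (subl K f) b d else 0"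
  have eq: "?g = (\<lambda>(b, d). if b < d then nat (mu k K f b d) else 0)"
    using mult_subl[OF fK] by (auto simp: fun_eq_iff)
  have "{x. 0 < ?g x} \<subseteq> ereal ` f ` K \<times> insert \<infinity> (ereal ` f ` K)"
  proof
    fix x assume x0: "x \<in> {x. 0 < ?g x}"
    obtain b d where xbd: "x = (b, d)" by (cases x)
    have x: "x = (b, d)" "b < d" "0 < nat (mu k K f b d)" using x0 unfolding eq xbd by (auto split: if_splits)
    hence m0: "mu k K f b d \<noteq> 0" by simp
    have "b \<in> ereal ` f ` K" "d \<in> insert \<infinity> (ereal ` f ` K)" by (rule mu_support(1)[OF m0], rule mu_support(2)[OF m0])
    thus "x \<in> ereal ` f ` K \<times> insert \<infinity> (ereal ` f ` K)" using x(1) by simp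
  qed
  hence "finite {x. 0 < ?g x}" by (rule finite_subset) (use fK in simp)
  hence "count (pdiagram k (subl K f)) = ?g" unfolding pdiagram_def by (rule count_Abs_multiset)
  thus ?thesis unfolding eq by simp
qed



definition fdown :: "'v set set \<Rightarrow> ('v set \<Rightarrow> real) \<Rightarrow> 'v set set \<Rightarrow> bool" where
  "fdown K f S \<longleftrightarrow> S \<subseteq> K \<and> (\<forall>\<sigma>\<in>S. \<forall>\<tau>\<in>K. f \<tau> \<le> f \<sigma> \<longrightarrow> \<tau> \<in> S)"

lemma fdown_Le: "fdown K f (Le K f x)"
  unfolding fdown_def Le_def by auto (metis ereal_less_eq(3) order_trans)
lemma fdown_Lt: "fdown K f (Lt K f x)"
  unfolding fdown_def Lt_def by auto (metis ereal_less_eq(3) le_less_trans)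
lemma fdown_K: "fdown K f K"
  unfolding fdown_def by auto

lemma rank_inner:
  assumes K: "fin_simplicial_complex K" and s0: "s0 \<in> K"
  shows "fdown K f T \<Longrightarrow> Le K f (ereal (f s0)) \<subseteq> T \<Longrightarrow>
    int (pers_rank k (Le K f (ereal (f s0))) T) - int (pers_rank k (Lt K f (ereal (f s0))) T)
    = (\<Sum>e \<in> insert \<infinity> (ereal ` f ` K) - ereal ` f ` T. mu k K f (ereal (f s0)) e)"
proof (induction "card (K - T)" arbitrary: T rule: less_induct)
  case less
  have fK: "finite K" using K by (rule fsc_finite)
  define v0 where "v0 = f s0"
  show ?case
  proof (cases "T = K")
    case True
    have e: "insert \<infinity> (ereal ` f ` K) - ereal ` f ` K = {\<infinity>}" by auto
    show ?thesis unfolding True e by (simp add: mu_def)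
  next
    case False
    have TK: "T \<subseteq> K" using less.prems unfolding fdown_def by blast
    have ne: "K - T \<noteq> {}" using TK False by blast
    have fin: "finite (f ` (K - T))" using fK by simp
    define d0 where "d0 = Min (f ` (K - T))"
    have "d0 \<in> f ` (K - T)" unfolding d0_def by (rule Min_in[OF fin]) (use ne in simp)
    then obtain t0 where t0: "t0 \<in> K" "t0 \<notin> T" "f t0 = d0" by auto
    have minle: "d0 \<le> f s" if "s \<in> K" "s \<notin> T" for s
      unfolding d0_def using fin that by (intro Min_le) auto
    have Tchar: "s \<in> T \<longleftrightarrow> f s < d0" if "s \<in> K" for s
    proof
      assume sT: "s \<in> T"
      show "f s < d0"
      proof (rule ccontr)
        assume "\<not> f s < d0"
        hence "f t0 \<le> f s" using t0 by simp
        hence "t0 \<in> T" using less.prems(1) sT t0(1) unfolding fdown_def by blast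
        thus False using t0 by blast
      qed
    next
      assume "f s < d0"
      thus "s \<in> T" using minle[OF that] by force
    qed
    have TLt: "T = Lt K f (ereal d0)" unfolding Lt_def using Tchar TK by auto
    define T' where "T' = Le K f (ereal d0)"
    have T'f: "fdown K f T'" unfolding T'_def by (rule fdown_Le)
    have TT': "T \<subseteq> T'" unfolding TLt T'_def by (rule Lt_Le)
    have t0T': "t0 \<in> T'" unfolding T'_def Le_def using t0 by simp
    have v0d0: "v0 < d0"
    proof (rule ccontr)
      assume "\<not> v0 < d0"
      hence "t0 \<in> Le K f (ereal (f s0))" unfolding Le_def v0_def using t0 by auto
      thus False using less.prems(2) t0 by blast
    qed
    have "card (K - T') < card (K - T)"
    proof (rule psubset_card_mono)
      show "finite (K - T)" using fK by simp
      show "K - T' \<subset> K - T" using TT' t0 t0T' by blast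
    qed
    hence IH: "int (pers_rank k (Le K f (ereal (f s0))) T') - int (pers_rank k (Lt K f (ereal (f s0))) T')
      = (\<Sum>e \<in> insert \<infinity> (ereal ` f ` K) - ereal ` f ` T'. mu k K f (ereal (f s0)) e)"
      using less.hyps T'f TT' less.prems(2) by blast
    have imT': "ereal ` f ` T' = insert (ereal d0) (ereal ` f ` T)"
    proof (rule set_eqI)
      fix x show "x \<in> ereal ` f ` T' \<longleftrightarrow> x \<in> insert (ereal d0) (ereal ` f ` T)"
        unfolding T'_def TLt Le_def Lt_def using t0 by (auto simp: order_le_less)
    qed
    have d0nT: "ereal d0 \<notin> ereal ` f ` T" unfolding TLt Lt_def by auto
    have d0V: "ereal d0 \<in> insert \<infinity> (ereal ` f ` K)" using t0 by auto
    have setE: "insert \<infinity> (ereal ` f ` K) - ereal ` f ` T = insert (ereal d0) (insert \<infinity> (ereal ` f ` K) - ereal ` f ` T')"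
      unfolding imT' using d0nT d0V by blast
    have fin2: "finite (insert \<infinity> (ereal ` f ` K) - ereal ` f ` T')" using fK by simp
    have "(\<Sum>e \<in> insert \<infinity> (ereal ` f ` K) - ereal ` f ` T. mu k K f (ereal (f s0)) e)
        = mu k K f (ereal (f s0)) (ereal d0) + (\<Sum>e \<in> insert \<infinity> (ereal ` f ` K) - ereal ` f ` T'. mu k K f (ereal (f s0)) e)"
      unfolding setE by (rule sum.insert[OF fin2]) (simp add: imT')
    moreover have "mu k K f (ereal (f s0)) (ereal d0) =
        int (pers_rank k (Le K f (ereal (f s0))) T) - int (pers_rank k (Lt K f (ereal (f s0))) T)
        - (int (pers_rank k (Le K f (ereal (f s0))) T') - int (pers_rank k (Lt K f (ereal (f s0))) T'))"
      unfolding mu_def TLt T'_def using v0d0 unfolding v0_def by simp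
    ultimately show ?thesis using IH by simp
  qed
qed

lemma rank_formula:
  assumes K: "fin_simplicial_complex K" and T: "fdown K f T"
  shows "fdown K f S \<Longrightarrow> S \<subseteq> T \<Longrightarrow>
    int (pers_rank k S T) = (\<Sum>v \<in> ereal ` f ` S. \<Sum>e \<in> insert \<infinity> (ereal ` f ` K) - ereal ` f ` T. mu k K f v e)"
proof (induction "card S" arbitrary: S rule: less_induct)
  case less
  have fK: "finite K" using K by (rule fsc_finite)
  have SK: "S \<subseteq> K" using less.prems unfolding fdown_def by blast
  have fS: "finite S" using finite_subset[OF SK fK] .
  show ?case
  proof (cases "S = {}")
    case True thus ?thesis by (simp add: pr_empty)
  next
    case False
    have fin: "finite (f ` S)" using fS by simp
    define v0 where "v0 = Max (f ` S)"
    have "v0 \<in> f ` S" unfolding v0_def by (rule Max_in[OF fin]) (use False in simp)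
    then obtain s0 where s0: "s0 \<in> S" "f s0 = v0" by auto
    have s0K: "s0 \<in> K" using s0 SK by blast
    have SLe: "S = Le K f (ereal (f s0))"
    proof (rule set_eqI)
      fix s show "s \<in> S \<longleftrightarrow> s \<in> Le K f (ereal (f s0))"
      proof
        assume "s \<in> S"
        hence "f s \<le> v0" unfolding v0_def using fin by (intro Max_ge) auto
        thus "s \<in> Le K f (ereal (f s0))" unfolding Le_def using s0 SK \<open>s \<in> S\<close> by auto
      next
        assume "s \<in> Le K f (ereal (f s0))"
        hence "s \<in> K" "f s \<le> f s0" unfolding Le_def by auto
        thus "s \<in> S" using less.prems(1) s0(1) unfolding fdown_def by blast
      qed
    qed
    define S' where "S' = Lt K f (ereal (f s0))"
    have S'f: "fdown K f S'" unfolding S'_def by (rule fdown_Lt)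
    have S'S: "S' \<subseteq> S" unfolding SLe S'_def by (rule Lt_Le)
    have s0S': "s0 \<notin> S'" unfolding S'_def Lt_def by simp
    have "card S' < card S" using S'S s0S' s0(1) fS by (intro psubset_card_mono) auto
    hence IH: "int (pers_rank k S' T) = (\<Sum>v \<in> ereal ` f ` S'. \<Sum>e \<in> insert \<infinity> (ereal ` f ` K) - ereal ` f ` T. mu k K f v e)"
      using less.hyps S'f S'S less.prems(2) by blast
    have inner: "int (pers_rank k S T) - int (pers_rank k S' T)
      = (\<Sum>e \<in> insert \<infinity> (ereal ` f ` K) - ereal ` f ` T. mu k K f (ereal (f s0)) e)"
      unfolding SLe S'_def by (rule rank_inner[OF K s0K T]) (use less.prems(2) SLe in simp)
    have imS: "ereal ` f ` S = insert (ereal (f s0)) (ereal ` f ` S')"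
    proof (rule set_eqI)
      fix x show "x \<in> ereal ` f ` S \<longleftrightarrow> x \<in> insert (ereal (f s0)) (ereal ` f ` S')"
        unfolding S'_def SLe Le_def Lt_def using s0K by (auto simp: order_le_less)
    qed
    have nS': "ereal (f s0) \<notin> ereal ` f ` S'" unfolding S'_def Lt_def by auto
    have fS': "finite (ereal ` f ` S')" using finite_subset[OF S'S fS] by simp
    show ?thesis unfolding imS sum.insert[OF fS' nS'] using IH inner by simp
  qed
qed

lemma if_of_bool: "(if P then (x::int) else 0) = x * of_bool P" by simp

lemma rank_formula2:
  assumes K: "fin_simplicial_complex K" and T: "fdown K f T" and S: "fdown K f S" and ST: "S \<subseteq> T"
  shows "int (pers_rank k S T) = (\<Sum>v \<in> ereal ` f ` K. \<Sum>e \<in> insert \<infinity> (ereal ` f ` K).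
      mu k K f v e * (of_bool (v \<in> ereal ` f ` S) * of_bool (e \<notin> ereal ` f ` T)))"
proof -
  have fK: "finite K" using K by (rule fsc_finite)
  have SK: "S \<subseteq> K" using S unfolding fdown_def by blast
  have 1: "ereal ` f ` S = {v \<in> ereal ` f ` K. v \<in> ereal ` f ` S}" using SK by blast
  have 2: "insert \<infinity> (ereal ` f ` K) - ereal ` f ` T = {e \<in> insert \<infinity> (ereal ` f ` K). e \<notin> ereal ` f ` T}" by blast
  have f1: "finite (ereal ` f ` K)" "finite (insert \<infinity> (ereal ` f ` K))" using fK by auto
  have "int (pers_rank k S T) = (\<Sum>v \<in> ereal ` f ` S. \<Sum>e \<in> insert \<infinity> (ereal ` f ` K) - ereal ` f ` T. mu k K f v e)"
    by (rule rank_formula[OF K T S ST])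
  also have "\<dots> = (\<Sum>v \<in> {v \<in> ereal ` f ` K. v \<in> ereal ` f ` S}. \<Sum>e \<in> {e \<in> insert \<infinity> (ereal ` f ` K). e \<notin> ereal ` f ` T}. mu k K f v e)"
    using 1 2 by simp
  also have "\<dots> = (\<Sum>v \<in> ereal ` f ` K. if v \<in> ereal ` f ` S then (\<Sum>e \<in> insert \<infinity> (ereal ` f ` K). if e \<notin> ereal ` f ` T then mu k K f v e else 0) else 0)"
    unfolding sum.inter_filter[OF f1(1)] sum.inter_filter[OF f1(2)] ..
  also have "\<dots> = (\<Sum>v \<in> ereal ` f ` K. \<Sum>e \<in> insert \<infinity> (ereal ` f ` K).
      mu k K f v e * (of_bool (v \<in> ereal ` f ` S) * of_bool (e \<notin> ereal ` f ` T)))"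
    by (rule sum.cong[OF refl]) (auto simp: if_of_bool sum_distrib_right)
  finally show ?thesis .
qed

definition compat :: "'v set set \<Rightarrow> ('v set \<Rightarrow> real) \<Rightarrow> ('v set \<Rightarrow> real) \<Rightarrow> bool" where
  "compat K f g \<longleftrightarrow> (\<forall>s\<in>K. \<forall>t\<in>K. f s \<le> f t \<longrightarrow> g s \<le> g t)"

definition lev :: "'v set set \<Rightarrow> ('v set \<Rightarrow> real) \<Rightarrow> ('v set \<Rightarrow> real) \<Rightarrow> ereal \<Rightarrow> ereal" where
  "lev K f g x = (if x = \<infinity> then \<infinity> else ereal (g (SOME s. s \<in> K \<and> ereal (f s) = x)))"

lemma lev_eq:
  assumes c: "compat K f g" and s: "s \<in> K"
  shows "lev K f g (ereal (f s)) = ereal (g s)"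
proof -
  have ex: "\<exists>t. t \<in> K \<and> ereal (f t) = ereal (f s)" using s by blast
  define t where "t = (SOME t. t \<in> K \<and> ereal (f t) = ereal (f s))"
  have t: "t \<in> K" "f t = f s" using someI_ex[OF ex] unfolding t_def by auto
  have "g t = g s" using c t s unfolding compat_def by (metis order_antisym order_refl)
  thus ?thesis unfolding lev_def t_def[symmetric] by simp
qed

lemma lev_inf[simp]: "lev K f g \<infinity> = \<infinity>" unfolding lev_def by simp

lemma fdown_Leg: "compat K f g \<Longrightarrow> fdown K f (Le K g w)"
  unfolding fdown_def Le_def compat_def by auto (metis ereal_less_eq(3) order_trans)
lemma fdown_Ltg: "compat K f g \<Longrightarrow> fdown K f (Lt K g w)"
  unfolding fdown_def Lt_def compat_def by auto (metis ereal_less_eq(3) le_less_trans)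

lemma img_Leg:
  assumes c: "compat K f g" and x: "x \<in> insert \<infinity> (ereal ` f ` K)" and w: "w \<noteq> \<infinity>"
  shows "x \<in> ereal ` f ` (Le K g w) \<longleftrightarrow> lev K f g x \<le> w"
proof (cases "x = \<infinity>")
  case True thus ?thesis using w by auto
next
  case False
  then obtain s where s: "s \<in> K" "x = ereal (f s)" using x by auto
  have "x \<in> ereal ` f ` (Le K g w) \<longleftrightarrow> ereal (g s) \<le> w"
  proof
    assume "x \<in> ereal ` f ` (Le K g w)"
    then obtain t where t: "t \<in> K" "ereal (g t) \<le> w" "f t = f s" using s unfolding Le_def by auto
    have "g s \<le> g t" using c t s unfolding compat_def by simp
    thus "ereal (g s) \<le> w" using t(2) by (metis ereal_less_eq(3) order_trans)
  next
    assume "ereal (g s) \<le> w" thus "x \<in> ereal ` f ` (Le K g w)" unfolding Le_def using s by auto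
  qed
  thus ?thesis using lev_eq[OF c s(1)] s by simp
qed

lemma img_Ltg:
  assumes c: "compat K f g" and x: "x \<in> insert \<infinity> (ereal ` f ` K)"
  shows "x \<in> ereal ` f ` (Lt K g w) \<longleftrightarrow> lev K f g x < w"
proof (cases "x = \<infinity>")
  case True thus ?thesis by auto
next
  case False
  then obtain s where s: "s \<in> K" "x = ereal (f s)" using x by auto
  have "x \<in> ereal ` f ` (Lt K g w) \<longleftrightarrow> ereal (g s) < w"
  proof
    assume "x \<in> ereal ` f ` (Lt K g w)"
    then obtain t where t: "t \<in> K" "ereal (g t) < w" "f t = f s" using s unfolding Lt_def by auto
    have "g s \<le> g t" using c t s unfolding compat_def by simp
    thus "ereal (g s) < w" using t(2) by (metis ereal_less_eq(3) le_less_trans)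
  next
    assume "ereal (g s) < w" thus "x \<in> ereal ` f ` (Lt K g w)" unfolding Lt_def using s by auto
  qed
  thus ?thesis using lev_eq[OF c s(1)] s by simp
qed

lemma img_K: "x \<in> insert \<infinity> (ereal ` f ` K) \<Longrightarrow> x \<notin> ereal ` f ` K \<longleftrightarrow> x = \<infinity>"
  by auto

lemma lev_real: "compat K f g \<Longrightarrow> v \<in> ereal ` f ` K \<Longrightarrow> lev K f g v \<noteq> \<infinity> \<and> lev K f g v \<noteq> -\<infinity>"
  using lev_eq by fastforce

lemma sum2_diff: "(\<Sum>v\<in>A. \<Sum>e\<in>B. (m v e :: int) * c1 v e) - (\<Sum>v\<in>A. \<Sum>e\<in>B. m v e * c2 v e)
   = (\<Sum>v\<in>A. \<Sum>e\<in>B. m v e * (c1 v e - c2 v e))"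
  by (simp add: sum_subtractf right_diff_distrib)
lemma sum2_add: "(\<Sum>v\<in>A. \<Sum>e\<in>B. (m v e :: int) * c1 v e) + (\<Sum>v\<in>A. \<Sum>e\<in>B. m v e * c2 v e)
   = (\<Sum>v\<in>A. \<Sum>e\<in>B. m v e * (c1 v e + c2 v e))"
  by (simp add: sum.distrib distrib_left)

lemma rank_formula3:
  assumes K: "fin_simplicial_complex K" and T: "fdown K f T" and S: "fdown K f S" and ST: "S \<subseteq> T"
    and P: "\<And>v. v \<in> ereal ` f ` K \<Longrightarrow> (v \<in> ereal ` f ` S) = P v"
    and Q: "\<And>e. e \<in> insert \<infinity> (ereal ` f ` K) \<Longrightarrow> (e \<notin> ereal ` f ` T) = Q e"
  shows "int (pers_rank k S T) = (\<Sum>v \<in> ereal ` f ` K. \<Sum>e \<in> insert \<infinity> (ereal ` f ` K).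
      mu k K f v e * (of_bool (P v) * of_bool (Q e)))"
  unfolding rank_formula2[OF K T S ST]
  by (rule sum.cong[OF refl], rule sum.cong[OF refl]) (simp add: P Q)

lemma ind4: "(of_bool (x \<le> b) * of_bool (\<not> y < d) - of_bool (x < b) * of_bool (\<not> y < d)
   - of_bool (x \<le> b) * of_bool (\<not> y \<le> d) + of_bool (x < b) * of_bool (\<not> y \<le> d) :: int)
   = of_bool (x = b \<and> y = d)" for x b y d :: "'a::linorder"
  by (cases x b rule: linorder_cases; cases y d rule: linorder_cases) auto

lemma ind2: "(of_bool (x \<le> b) * of_bool Q - of_bool (x < b) * of_bool Q :: int) = of_bool (x = b \<and> Q)"
  for x b :: "'a::linorder"
  by (cases x b rule: linorder_cases) auto

lemma Le_Lt_mono: "b < d \<Longrightarrow> Le K g b \<subseteq> Lt K g d"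
  unfolding Le_def Lt_def by auto
lemma Lt_mono: "b \<le> d \<Longrightarrow> Lt K g b \<subseteq> Lt K g d"
  unfolding Lt_def by auto
lemma Le_mono: "b \<le> d \<Longrightarrow> Le K g b \<subseteq> Le K g d"
  unfolding Le_def by auto

lemma mu_g:
  assumes K: "fin_simplicial_complex K" and c: "compat K f g" and bd: "b < d"
  shows "mu k K g b d = (\<Sum>v \<in> ereal ` f ` K. \<Sum>e \<in> insert \<infinity> (ereal ` f ` K).
      mu k K f v e * of_bool (lev K f g v = b \<and> lev K f g e = d))"
proof (cases b)
  case MInf
  have z: "mu k K f v e * of_bool (lev K f g v = b \<and> lev K f g e = d) = 0" if "v \<in> ereal ` f ` K" for v e
    using lev_real[OF c that] MInf by simp
  have "(\<Sum>v \<in> ereal ` f ` K. \<Sum>e \<in> insert \<infinity> (ereal ` f ` K).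
      mu k K f v e * of_bool (lev K f g v = b \<and> lev K f g e = d)) = 0"
    by (rule sum.neutral, rule ballI, rule sum.neutral, rule ballI, rule z)
  thus ?thesis using MInf unfolding mu_def by simp
next
  case PInf thus ?thesis using bd by simp
next
  case (real r)
  have bi: "b \<noteq> \<infinity>" "b \<noteq> -\<infinity>" using real by auto
  have PLe: "\<And>v. v \<in> ereal ` f ` K \<Longrightarrow> (v \<in> ereal ` f ` Le K g b) = (lev K f g v \<le> b)"
    using img_Leg[OF c _ bi(1)] by blast
  have PLt: "\<And>v. v \<in> ereal ` f ` K \<Longrightarrow> (v \<in> ereal ` f ` Lt K g b) = (lev K f g v < b)"
    using img_Ltg[OF c] by blast
  show ?thesis
  proof (cases "d = \<infinity>")
    case True
    have QK: "\<And>e. e \<in> insert \<infinity> (ereal ` f ` K) \<Longrightarrow> (e \<notin> ereal ` f ` K) = (lev K f g e = \<infinity>)"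
      using lev_real[OF c] by auto
    have r1: "int (pers_rank k (Le K g b) K) = (\<Sum>v \<in> ereal ` f ` K. \<Sum>e \<in> insert \<infinity> (ereal ` f ` K).
      mu k K f v e * (of_bool (lev K f g v \<le> b) * of_bool (lev K f g e = \<infinity>)))"
      by (rule rank_formula3[OF K fdown_K fdown_Leg[OF c] Le_sub PLe QK])
    have r2: "int (pers_rank k (Lt K g b) K) = (\<Sum>v \<in> ereal ` f ` K. \<Sum>e \<in> insert \<infinity> (ereal ` f ` K).
      mu k K f v e * (of_bool (lev K f g v < b) * of_bool (lev K f g e = \<infinity>)))"
      by (rule rank_formula3[OF K fdown_K fdown_Ltg[OF c] Lt_sub PLt QK])
    have "mu k K g b d = int (pers_rank k (Le K g b) K) - int (pers_rank k (Lt K g b) K)"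
      unfolding mu_def using bd bi True by simp
    also have "\<dots> = (\<Sum>v \<in> ereal ` f ` K. \<Sum>e \<in> insert \<infinity> (ereal ` f ` K).
      mu k K f v e * (of_bool (lev K f g v \<le> b) * of_bool (lev K f g e = \<infinity>) - of_bool (lev K f g v < b) * of_bool (lev K f g e = \<infinity>)))"
      unfolding r1 r2 sum2_diff ..
    also have "\<dots> = (\<Sum>v \<in> ereal ` f ` K. \<Sum>e \<in> insert \<infinity> (ereal ` f ` K).
      mu k K f v e * of_bool (lev K f g v = b \<and> lev K f g e = d))"
      unfolding ind2 True ..
    finally show ?thesis .
  next
    case False
    have QLe: "\<And>e. e \<in> insert \<infinity> (ereal ` f ` K) \<Longrightarrow> (e \<notin> ereal ` f ` Le K g d) = (\<not> lev K f g e \<le> d)"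
      using img_Leg[OF c _ False] by blast
    have QLt: "\<And>e. e \<in> insert \<infinity> (ereal ` f ` K) \<Longrightarrow> (e \<notin> ereal ` f ` Lt K g d) = (\<not> lev K f g e < d)"
      using img_Ltg[OF c] by blast
    have bd': "b \<le> d" using bd by simp
    have r1: "int (pers_rank k (Le K g b) (Lt K g d)) = (\<Sum>v \<in> ereal ` f ` K. \<Sum>e \<in> insert \<infinity> (ereal ` f ` K).
      mu k K f v e * (of_bool (lev K f g v \<le> b) * of_bool (\<not> lev K f g e < d)))"
      by (rule rank_formula3[OF K fdown_Ltg[OF c] fdown_Leg[OF c] Le_Lt_mono[OF bd] PLe QLt])
    have r2: "int (pers_rank k (Lt K g b) (Lt K g d)) = (\<Sum>v \<in> ereal ` f ` K. \<Sum>e \<in> insert \<infinity> (ereal ` f ` K).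
      mu k K f v e * (of_bool (lev K f g v < b) * of_bool (\<not> lev K f g e < d)))"
      by (rule rank_formula3[OF K fdown_Ltg[OF c] fdown_Ltg[OF c] Lt_mono[OF bd'] PLt QLt])
    have r3: "int (pers_rank k (Le K g b) (Le K g d)) = (\<Sum>v \<in> ereal ` f ` K. \<Sum>e \<in> insert \<infinity> (ereal ` f ` K).
      mu k K f v e * (of_bool (lev K f g v \<le> b) * of_bool (\<not> lev K f g e \<le> d)))"
      by (rule rank_formula3[OF K fdown_Leg[OF c] fdown_Leg[OF c] Le_mono[OF bd'] PLe QLe])
    have r4: "int (pers_rank k (Lt K g b) (Le K g d)) = (\<Sum>v \<in> ereal ` f ` K. \<Sum>e \<in> insert \<infinity> (ereal ` f ` K).
      mu k K f v e * (of_bool (lev K f g v < b) * of_bool (\<not> lev K f g e \<le> d)))"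
      by (rule rank_formula3[OF K fdown_Leg[OF c] fdown_Ltg[OF c] order_trans[OF Lt_Le Le_mono[OF bd']] PLt QLe])
    have "mu k K g b d = int (pers_rank k (Le K g b) (Lt K g d)) - int (pers_rank k (Lt K g b) (Lt K g d))
         - int (pers_rank k (Le K g b) (Le K g d)) + int (pers_rank k (Lt K g b) (Le K g d))"
      unfolding mu_def using bd bi False by simp
    also have "\<dots> = (\<Sum>v \<in> ereal ` f ` K. \<Sum>e \<in> insert \<infinity> (ereal ` f ` K).
      mu k K f v e * (of_bool (lev K f g v \<le> b) * of_bool (\<not> lev K f g e < d) - of_bool (lev K f g v < b) * of_bool (\<not> lev K f g e < d)
       - of_bool (lev K f g v \<le> b) * of_bool (\<not> lev K f g e \<le> d) + of_bool (lev K f g v < b) * of_bool (\<not> lev K f g e \<le> d)))"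
      unfolding r1 r2 r3 r4 sum2_diff sum2_add ..
    also have "\<dots> = (\<Sum>v \<in> ereal ` f ` K. \<Sum>e \<in> insert \<infinity> (ereal ` f ` K).
      mu k K f v e * of_bool (lev K f g v = b \<and> lev K f g e = d))"
      unfolding ind4 ..
    finally show ?thesis .
  qed
qed



lemma image_mset_sum: "image_mset h (sum g A) = (\<Sum>a\<in>A. image_mset h (g a))"
  using sum_comp_morphism[of "image_mset h" g A] by (simp add: o_def)

lemma sum_gt0_ex: "(0::nat) < sum h A \<Longrightarrow> \<exists>a\<in>A. 0 < h a"
proof (rule ccontr)
  assume "0 < sum h A" "\<not> (\<exists>a\<in>A. 0 < h a)"
  hence "sum h A = 0" by (intro sum.neutral) auto
  thus False using \<open>0 < sum h A\<close> by simp
qed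

lemma nat_sum2:
  assumes "\<And>v e. v \<in> A \<Longrightarrow> e \<in> B \<Longrightarrow> 0 \<le> F v e"
  shows "nat (\<Sum>v\<in>A. \<Sum>e\<in>B. (F v e :: int)) = (\<Sum>v\<in>A. \<Sum>e\<in>B. nat (F v e))"
proof -
  have "int (\<Sum>v\<in>A. \<Sum>e\<in>B. nat (F v e)) = (\<Sum>v\<in>A. \<Sum>e\<in>B. F v e)"
    unfolding int_sum using assms by (intro sum.cong refl) simp
  thus ?thesis by (metis nat_int)
qed

lemma sum2_delta:
  assumes "finite A" "finite B"
  shows "(\<Sum>v\<in>A. \<Sum>e\<in>B. (h v e :: nat) * of_bool (v = b \<and> e = d)) = (if b \<in> A \<and> d \<in> B then h b d else 0)"
proof -
  have "(\<Sum>v\<in>A. \<Sum>e\<in>B. h v e * of_bool (v = b \<and> e = d)) = (\<Sum>v\<in>A. if v = b then (if d \<in> B then h v d else 0) else 0)"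
    by (rule sum.cong[OF refl]) (use assms in \<open>auto simp: if_distrib[of "\<lambda>x. _ * x"] sum.delta'\<close>)
  also have "\<dots> = (if b \<in> A \<and> d \<in> B then h b d else 0)"
    using assms by (simp add: sum.delta')
  finally show ?thesis .
qed

lemma edist_real: "\<bar>a - b\<bar> \<le> \<delta> \<Longrightarrow> 0 \<le> \<delta> \<Longrightarrow> edist (ereal a) (ereal b) \<le> ereal \<delta>"
  unfolding edist_def by simp

lemma diag_dist_real: "b - a \<le> 2 * \<delta> \<Longrightarrow> diag_dist (ereal a, ereal b) \<le> ereal \<delta>"
  unfolding diag_dist_def by (simp add: field_simps)

lemma Lv_real:
  assumes c: "compat K f g" and v: "v \<in> ereal ` f ` K"
  obtains s where "s \<in> K" "v = ereal (f s)" "lev K f g v = ereal (g s)"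
  using v lev_eq[OF c] by blast

lemma dB_close:
  assumes K: "fin_simplicial_complex K" and c: "compat K f g"
    and close: "\<And>s. s \<in> K \<Longrightarrow> \<bar>f s - g s\<bar> \<le> \<delta>" and d0: "0 \<le> \<delta>"
  shows "d_B (subl K f) (subl K g) \<le> ereal \<delta>"
  unfolding d_B_def
proof (rule SUP_least)
  fix k
  have fK: "finite K" using K by (rule fsc_finite)
  define V where "V = ereal ` f ` K"
  define Vi where "Vi = insert \<infinity> V"
  define L where "L = lev K f g"
  define n where "n v e = nat (mu k K f v e)" for v e
  define Mt where "Mt = (\<Sum>v\<in>V. \<Sum>e\<in>Vi. replicate_mset (n v e * of_bool (L v < L e)) ((v, e), (L v, L e)))"
  define A where "A = pdiagram k (subl K f)"
  define B where "B = pdiagram k (subl K g)"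
  have fV: "finite V" "finite Vi" unfolding V_def Vi_def using fK by auto
  have cB: "count B x = count (image_mset snd Mt) x" for x
  proof -
    obtain b d where x: "x = (b, d)" by (cases x)
    have cg: "count B (b, d) = (\<Sum>v\<in>V. \<Sum>e\<in>Vi. if b < d then nat (mu k K f v e * of_bool (L v = b \<and> L e = d)) else 0)"
    proof (cases "b < d")
      case True
      have "count B (b, d) = nat (mu k K g b d)" unfolding B_def count_pdiagram_subl[OF K] using True by simp
      also have "\<dots> = nat (\<Sum>v\<in>V. \<Sum>e\<in>Vi. mu k K f v e * of_bool (L v = b \<and> L e = d))"
        unfolding mu_g[OF K c True] V_def Vi_def L_def ..
      also have "\<dots> = (\<Sum>v\<in>V. \<Sum>e\<in>Vi. nat (mu k K f v e * of_bool (L v = b \<and> L e = d)))"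
        by (rule nat_sum2) (simp add: mu_nonneg[OF K])
      finally show ?thesis using True by simp
    next
      case False thus ?thesis unfolding B_def count_pdiagram_subl[OF K] by simp
    qed
    have cs: "count (image_mset snd Mt) (b, d) = (\<Sum>v\<in>V. \<Sum>e\<in>Vi. if (b, d) = (L v, L e) then n v e * of_bool (L v < L e) else 0)"
      unfolding Mt_def image_mset_sum image_replicate_mset count_sum count_replicate_mset by simp
    have "count B (b, d) = count (image_mset snd Mt) (b, d)"
      unfolding cg cs n_def by (rule sum.cong[OF refl], rule sum.cong[OF refl]) auto
    thus ?thesis using x by simp
  qed
  hence Beq: "B = image_mset snd Mt" by (rule multiset_eqI)
  have cfst: "count (image_mset fst Mt) (b, d) = (if b \<in> V \<and> d \<in> Vi then n b d * of_bool (L b < L d) else 0)" for b d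
  proof -
    have "count (image_mset fst Mt) (b, d) = (\<Sum>v\<in>V. \<Sum>e\<in>Vi. (n v e * of_bool (L v < L e)) * of_bool (v = b \<and> e = d))"
      unfolding Mt_def image_mset_sum image_replicate_mset count_sum count_replicate_mset
      by (rule sum.cong[OF refl], rule sum.cong[OF refl]) auto
    also have "\<dots> = (if b \<in> V \<and> d \<in> Vi then n b d * of_bool (L b < L d) else 0)"
      by (rule sum2_delta[OF fV])
    finally show ?thesis .
  qed
  have cA: "count A (b, d) = (if b < d then n b d else 0)" for b d
    unfolding A_def count_pdiagram_subl[OF K] n_def ..
  have sub: "count (image_mset fst Mt) x \<le> count A x" for x
  proof -
    obtain b d where x: "x = (b, d)" by (cases x)
    have "n b d = 0" if "\<not> b < d" unfolding n_def mu_def using that by simp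
    thus ?thesis unfolding x cfst cA by auto
  qed
  have strict: "b \<in> V \<and> d \<in> Vi \<and> \<not> L b < L d" if "count (image_mset fst Mt) (b, d) < count A (b, d)" for b d
  proof -
    have bd: "b < d" and np: "0 < n b d" using that unfolding cA by (auto split: if_splits)
    have m0: "mu k K f b d \<noteq> 0" using np unfolding n_def by simp
    have bV: "b \<in> V" unfolding V_def by (rule mu_support(1)[OF m0])
    have dV: "d \<in> Vi" unfolding Vi_def V_def by (rule mu_support(2)[OF m0])
    have "\<not> L b < L d" using that bV dV bd unfolding cfst cA by auto
    thus ?thesis using bV dV by simp
  qed
  have pm: "partial_matching Mt A B"
    unfolding partial_matching_def Beq using sub by (auto intro: mset_subset_eqI)
  have cost: "matching_cost Mt A B \<le> ereal \<delta>"
    unfolding matching_cost_def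
  proof (rule Sup_least)
    fix y assume y: "y \<in> insert 0 ((\<lambda>(p, q). pt_dist p q) ` set_mset Mt
       \<union> diag_dist ` set_mset (A - image_mset fst Mt) \<union> diag_dist ` set_mset (B - image_mset snd Mt))"
    have Bempty: "set_mset (B - image_mset snd Mt) = {}" unfolding Beq by simp
    consider (z) "y = 0" | (m) "y \<in> (\<lambda>(p, q). pt_dist p q) ` set_mset Mt"
      | (a) "y \<in> diag_dist ` set_mset (A - image_mset fst Mt)" using y Bempty by blast
    thus "y \<le> ereal \<delta>"
    proof cases
      case z thus ?thesis using d0 by simp
    next
      case m
      then obtain p where p: "p \<in># Mt" "y = (\<lambda>(p, q). pt_dist p q) p" by blast
      have "p \<in> (\<Union>v\<in>V. \<Union>e\<in>Vi. set_mset (replicate_mset (n v e * of_bool (L v < L e)) ((v, e), (L v, L e))))"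
        using p(1) unfolding Mt_def set_mset_sum[OF fV(1)] set_mset_sum[OF fV(2)] .
      then obtain v e where ve: "v \<in> V" "e \<in> Vi" "p = ((v, e), (L v, L e))" by (auto split: if_splits)
      obtain s where s: "s \<in> K" "v = ereal (f s)" "L v = ereal (g s)"
        using Lv_real[OF c, of v] ve(1) unfolding V_def L_def by blast
      have d1: "edist v (L v) \<le> ereal \<delta>" unfolding s(3) unfolding s(2) by (rule edist_real[OF close[OF s(1)] d0])
      have d2: "edist e (L e) \<le> ereal \<delta>"
      proof (cases "e = \<infinity>")
        case True thus ?thesis unfolding L_def edist_def using d0 by simp
      next
        case False
        hence "e \<in> V" using ve(2) unfolding Vi_def by simp
        then obtain t where t: "t \<in> K" "e = ereal (f t)" "L e = ereal (g t)"
          using Lv_real[OF c, of e] unfolding V_def L_def by blast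
        show ?thesis unfolding t(3) unfolding t(2) by (rule edist_real[OF close[OF t(1)] d0])
      qed
      show ?thesis unfolding p(2) ve(3) pt_dist_def using d1 d2 by simp
    next
      case a
      then obtain x where x: "x \<in># A - image_mset fst Mt" "y = diag_dist x" by blast
      obtain b d where xbd: "x = (b, d)" by (cases x)
      have "count (image_mset fst Mt) (b, d) < count A (b, d)" using x(1) unfolding xbd in_diff_count .
      hence st: "b \<in> V" "d \<in> Vi" "\<not> L b < L d" using strict by blast+
      obtain s where s: "s \<in> K" "b = ereal (f s)" "L b = ereal (g s)"
        using Lv_real[OF c, of b] st(1) unfolding V_def L_def by blast
      have "d \<noteq> \<infinity>" using st(3) s(3) unfolding L_def by auto
      hence "d \<in> V" using st(2) unfolding Vi_def by simp
      then obtain t where t: "t \<in> K" "d = ereal (f t)" "L d = ereal (g t)"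
        using Lv_real[OF c, of d] unfolding V_def L_def by blast
      have "g t \<le> g s" using st(3) s(3) t(3) by simp
      hence "f t - f s \<le> 2 * \<delta>" using close[OF s(1)] close[OF t(1)] by linarith
      thus ?thesis unfolding x(2) xbd s(2) t(2) by (rule diag_dist_real)
    qed
  qed
  have "bottleneck A B \<le> matching_cost Mt A B"
    unfolding bottleneck_def by (rule INF_lower) (use pm in simp)
  thus "bottleneck (pdiagram k (subl K f)) (pdiagram k (subl K g)) \<le> ereal \<delta>"
    using cost unfolding A_def B_def by (rule order_trans)
qed



definition mono_on_K :: "'v set set \<Rightarrow> ('v set \<Rightarrow> real) \<Rightarrow> bool" where
  "mono_on_K K f \<longleftrightarrow> (\<forall>s\<in>K. \<forall>t\<in>K. t \<subseteq> s \<longrightarrow> f t \<le> f s)"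

lemma mono_subl:
  assumes K: "fin_simplicial_complex K" and m: "mono_on_K K f"
  shows "mono_filtration (subl K f)"
  unfolding mono_filtration_def subl_def subcomplex_def
  using K m unfolding mono_on_K_def by (auto intro: order_trans)

lemma size_subl: "mf_size (subl K f) = card K"
  unfolding mf_size_def subl_def by simp

definition interp :: "('v set \<Rightarrow> real) \<Rightarrow> ('v set \<Rightarrow> real) \<Rightarrow> real \<Rightarrow> 'v set \<Rightarrow> real" where
  "interp f g t s = (1 - t) * f s + t * g s"

definition cross :: "'v set set \<Rightarrow> ('v set \<Rightarrow> real) \<Rightarrow> ('v set \<Rightarrow> real) \<Rightarrow> real set" where
  "cross K f g = (\<lambda>(s, t). (f s - f t) / ((f s - f t) - (g s - g t))) ` {p \<in> K \<times> K. f (fst p) - f (snd p) \<noteq> g (fst p) - g (snd p)}"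

lemma cross_finite: "finite K \<Longrightarrow> finite (cross K f g)"
  unfolding cross_def by (rule finite_imageI) (rule finite_subset[of _ "K \<times> K"], auto)

lemma mono_interp:
  assumes mf: "mono_on_K K f" and mg: "mono_on_K K g" and t: "0 \<le> t" "t \<le> 1"
  shows "mono_on_K K (interp f g t)"
  unfolding mono_on_K_def interp_def
proof (intro ballI impI)
  fix s u assume "s \<in> K" "u \<in> K" "u \<subseteq> s"
  hence "f u \<le> f s" "g u \<le> g s" using mf mg unfolding mono_on_K_def by auto
  thus "(1 - t) * f u + t * g u \<le> (1 - t) * f s + t * g s"
    using t by (intro add_mono mult_left_mono) auto
qed

lemma lin_root1:
  fixes A B a s :: real
  assumes as: "a < s" and p: "A + a * (B - A) > 0" and n: "A + s * (B - A) \<le> 0"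
  shows "A \<noteq> B \<and> a < A / (A - B) \<and> A / (A - B) \<le> s"
proof -
  have AB: "A \<noteq> B" using p n as by auto
  define t0 where "t0 = A / (A - B)"
  have e: "A + t * (B - A) = (B - A) * (t - t0)" for t
    unfolding t0_def using AB by (simp add: field_simps)
  have "B - A < 0"
  proof (rule ccontr)
    assume "\<not> B - A < 0"
    hence "B - A > 0" using AB by simp
    hence "a - t0 > 0" "s - t0 \<le> 0" using p n unfolding e by (auto simp: zero_less_mult_iff mult_le_0_iff)
    thus False using as by simp
  qed
  hence "a - t0 < 0" "s - t0 \<ge> 0" using p n unfolding e by (auto simp: zero_less_mult_iff mult_le_0_iff)
  thus ?thesis using AB unfolding t0_def by simp
qed

lemma lin_root2:
  fixes A B b s :: real
  assumes as: "s < b" and p: "A + b * (B - A) > 0" and n: "A + s * (B - A) \<le> 0"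
  shows "A \<noteq> B \<and> s \<le> A / (A - B) \<and> A / (A - B) < b"
proof -
  have AB: "A \<noteq> B" using p n as by auto
  define t0 where "t0 = A / (A - B)"
  have e: "A + t * (B - A) = (B - A) * (t - t0)" for t
    unfolding t0_def using AB by (simp add: field_simps)
  have "B - A > 0"
  proof (rule ccontr)
    assume "\<not> B - A > 0"
    hence "B - A < 0" using AB by simp
    hence "b - t0 < 0" "s - t0 \<ge> 0" using p n unfolding e by (auto simp: zero_less_mult_iff mult_le_0_iff)
    thus False using as by simp
  qed
  hence "b - t0 > 0" "s - t0 \<le> 0" using p n unfolding e by (auto simp: zero_less_mult_iff mult_le_0_iff)
  thus ?thesis using AB unfolding t0_def by simp
qed

lemma interp_diff: "interp f g t s - interp f g t u = (f s - f u) + t * ((g s - g u) - (f s - f u))"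
  unfolding interp_def by (simp add: algebra_simps)

lemma compat_mid:
  assumes nc: "cross K f g \<inter> {a<..<b} = {}" and ab: "a < b"
  shows "compat K (interp f g ((a + b) / 2)) (interp f g a)" "compat K (interp f g ((a + b) / 2)) (interp f g b)"
proof -
  define s where "s = (a + b) / 2"
  have as: "a < s" "s < b" unfolding s_def using ab by auto
  show "compat K (interp f g ((a + b) / 2)) (interp f g a)"
    unfolding compat_def s_def[symmetric]
  proof (intro ballI impI)
    fix p q assume pq: "p \<in> K" "q \<in> K" and le: "interp f g s p \<le> interp f g s q"
    show "interp f g a p \<le> interp f g a q"
    proof (rule ccontr)
      assume "\<not> interp f g a p \<le> interp f g a q"
      hence pos: "(f p - f q) + a * ((g p - g q) - (f p - f q)) > 0" using interp_diff[of f g a p q] by simp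
      have neg: "(f p - f q) + s * ((g p - g q) - (f p - f q)) \<le> 0" using le interp_diff[of f g s p q] by simp
      from lin_root1[OF as(1) pos neg] have r: "f p - f q \<noteq> g p - g q"
        "a < (f p - f q) / ((f p - f q) - (g p - g q))" "(f p - f q) / ((f p - f q) - (g p - g q)) \<le> s" by auto
      have "(f p - f q) / ((f p - f q) - (g p - g q)) \<in> cross K f g" unfolding cross_def
        using pq r(1) by (intro image_eqI[of _ _ "(p, q)"]) auto
      thus False using nc r(2,3) as by auto
    qed
  qed
  show "compat K (interp f g ((a + b) / 2)) (interp f g b)"
    unfolding compat_def s_def[symmetric]
  proof (intro ballI impI)
    fix p q assume pq: "p \<in> K" "q \<in> K" and le: "interp f g s p \<le> interp f g s q"
    show "interp f g b p \<le> interp f g b q"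
    proof (rule ccontr)
      assume "\<not> interp f g b p \<le> interp f g b q"
      hence pos: "(f p - f q) + b * ((g p - g q) - (f p - f q)) > 0" using interp_diff[of f g b p q] by simp
      have neg: "(f p - f q) + s * ((g p - g q) - (f p - f q)) \<le> 0" using le interp_diff[of f g s p q] by simp
      from lin_root2[OF as(2) pos neg] have r: "f p - f q \<noteq> g p - g q"
        "s \<le> (f p - f q) / ((f p - f q) - (g p - g q))" "(f p - f q) / ((f p - f q) - (g p - g q)) < b" by auto
      have "(f p - f q) / ((f p - f q) - (g p - g q)) \<in> cross K f g" unfolding cross_def
        using pq r(1) by (intro image_eqI[of _ _ "(p, q)"]) auto
      thus False using nc r(2,3) as by auto
    qed
  qed
qed

lemma interp_close:
  assumes "\<And>s. s \<in> K \<Longrightarrow> \<bar>f s - g s\<bar> \<le> D" "s \<in> K"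
  shows "\<bar>interp f g a s - interp f g b s\<bar> \<le> \<bar>b - a\<bar> * D"
proof -
  have "interp f g a s - interp f g b s = (b - a) * (f s - g s)" unfolding interp_def by (simp add: algebra_simps)
  hence "\<bar>interp f g a s - interp f g b s\<bar> = \<bar>b - a\<bar> * \<bar>f s - g s\<bar>" by (simp add: abs_mult)
  thus ?thesis using assms by (simp add: mult_left_mono)
qed

locale stab =
  fixes \<phi> :: "'v monofilt \<Rightarrow> real \<times> real \<Rightarrow> real" and v3 :: real
  assumes v3: "0 < v3"
    and st: "\<And>M N x. mono_filtration M \<Longrightarrow> mono_filtration N \<Longrightarrow> mf_size M = mf_size N \<Longrightarrow> x \<in> Delta1 \<Longrightarrow>
        ereal \<bar>\<phi> M x - \<phi> N x\<bar> \<le> ereal (v3 * real (mf_size M)) * d_B M N"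
begin

lemma step:
  assumes K: "fin_simplicial_complex K" and mf: "mono_on_K K f" and mg: "mono_on_K K g"
    and c: "compat K f g" and close: "\<And>s. s \<in> K \<Longrightarrow> \<bar>f s - g s\<bar> \<le> \<delta>" and d0: "0 \<le> \<delta>"
    and x: "x \<in> Delta1"
  shows "\<bar>\<phi> (subl K f) x - \<phi> (subl K g) x\<bar> \<le> v3 * real (card K) * \<delta>"
proof -
  have "ereal \<bar>\<phi> (subl K f) x - \<phi> (subl K g) x\<bar> \<le> ereal (v3 * real (card K)) * d_B (subl K f) (subl K g)"
    using st[OF mono_subl[OF K mf] mono_subl[OF K mg] _ x] size_subl by metis
  also have "\<dots> \<le> ereal (v3 * real (card K)) * ereal \<delta>"
  proof (rule ereal_mult_left_mono[OF dB_close[OF K c close d0]])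
    have "0 \<le> v3 * real (card K)" using v3 by simp
    thus "0 \<le> ereal (v3 * real (card K))" by simp
  qed
  finally show ?thesis by simp
qed

lemma path:
  assumes K: "fin_simplicial_complex K" and mf: "mono_on_K K f" and mg: "mono_on_K K g"
    and close: "\<And>s. s \<in> K \<Longrightarrow> \<bar>f s - g s\<bar> \<le> D" and D0: "0 \<le> D" and x: "x \<in> Delta1"
  shows "0 \<le> a \<Longrightarrow> a \<le> b \<Longrightarrow> b \<le> 1 \<Longrightarrow>
    \<bar>\<phi> (subl K (interp f g a)) x - \<phi> (subl K (interp f g b)) x\<bar> \<le> v3 * real (card K) * ((b - a) * D)"
proof (induction "card (cross K f g \<inter> {a<..<b})" arbitrary: a b rule: less_induct)
  case less
  have fK: "finite K" using K by (rule fsc_finite)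
  have fc: "finite (cross K f g)" by (rule cross_finite[OF fK])
  have c0: "0 \<le> v3 * real (card K)" using v3 by simp
  show ?case
  proof (cases "cross K f g \<inter> {a<..<b} = {}")
    case True
    show ?thesis
    proof (cases "a = b")
      case True thus ?thesis by simp
    next
      case False
      hence ab: "a < b" using less.prems by simp
      define s where "s = (a + b) / 2"
      have s01: "0 \<le> s" "s \<le> 1" "a < s" "s < b" unfolding s_def using ab less.prems by auto
      have m: "mono_on_K K (interp f g t)" if "0 \<le> t" "t \<le> 1" for t
        by (rule mono_interp[OF mf mg that])
      have ma: "mono_on_K K (interp f g a)" "mono_on_K K (interp f g b)" "mono_on_K K (interp f g s)"
        using m less.prems s01 by auto
      have c1: "compat K (interp f g s) (interp f g a)" "compat K (interp f g s) (interp f g b)"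
        using compat_mid[OF True ab] unfolding s_def by auto
      have cl1: "\<bar>interp f g s u - interp f g a u\<bar> \<le> (s - a) * D" if "u \<in> K" for u
        using interp_close[OF close that, where a=s and b=a] s01 by simp
      have cl2: "\<bar>interp f g s u - interp f g b u\<bar> \<le> (b - s) * D" if "u \<in> K" for u
        using interp_close[OF close that, where a=s and b=b] s01 by simp
      have nn1: "0 \<le> (s - a) * D" by (rule mult_nonneg_nonneg) (use s01 D0 in auto)
      have nn2: "0 \<le> (b - s) * D" by (rule mult_nonneg_nonneg) (use s01 D0 in auto)
      have d1: "\<bar>\<phi> (subl K (interp f g s)) x - \<phi> (subl K (interp f g a)) x\<bar> \<le> v3 * real (card K) * ((s - a) * D)"
        using step[OF K ma(3) ma(1) c1(1) cl1 nn1 x] .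
      have d2: "\<bar>\<phi> (subl K (interp f g s)) x - \<phi> (subl K (interp f g b)) x\<bar> \<le> v3 * real (card K) * ((b - s) * D)"
        using step[OF K ma(3) ma(2) c1(2) cl2 nn2 x] .
      have "v3 * real (card K) * ((s - a) * D) + v3 * real (card K) * ((b - s) * D) = v3 * real (card K) * ((b - a) * D)"
        by (simp add: algebra_simps)
      thus ?thesis using d1 d2 by linarith
    qed
  next
    case False
    then obtain t where t: "t \<in> cross K f g" "a < t" "t < b" by auto
    have lt1: "card (cross K f g \<inter> {a<..<t}) < card (cross K f g \<inter> {a<..<b})"
      by (rule psubset_card_mono) (use fc t in auto)
    have lt2: "card (cross K f g \<inter> {t<..<b}) < card (cross K f g \<inter> {a<..<b})"
      by (rule psubset_card_mono) (use fc t in auto)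
    have i1: "\<bar>\<phi> (subl K (interp f g a)) x - \<phi> (subl K (interp f g t)) x\<bar> \<le> v3 * real (card K) * ((t - a) * D)"
      using less.hyps[OF lt1] less.prems t by simp
    have i2: "\<bar>\<phi> (subl K (interp f g t)) x - \<phi> (subl K (interp f g b)) x\<bar> \<le> v3 * real (card K) * ((b - t) * D)"
      using less.hyps[OF lt2] less.prems t by simp
    have "v3 * real (card K) * ((t - a) * D) + v3 * real (card K) * ((b - t) * D) = v3 * real (card K) * ((b - a) * D)"
      by (simp add: algebra_simps)
    thus ?thesis using i1 i2 by linarith
  qed
qed

lemma stable_all:
  assumes K: "fin_simplicial_complex K" and mf: "mono_on_K K f" and mg: "mono_on_K K g"
    and close: "\<And>s. s \<in> K \<Longrightarrow> \<bar>f s - g s\<bar> \<le> D" and D0: "0 \<le> D" and x: "x \<in> Delta1"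
  shows "\<bar>\<phi> (subl K f) x - \<phi> (subl K g) x\<bar> \<le> v3 * real (card K) * D"
proof -
  have "interp f g 0 = f" "interp f g 1 = g" unfolding interp_def by auto
  thus ?thesis using path[OF K mf mg close D0 x, of 0 1] by simp
qed

end



lemma meas_R:
  assumes "0 \<le> w" "0 \<le> h"
  shows "emeasure (lborel :: (real \<times> real) measure) ({0..w} \<times> {0..h}) = ennreal (w * h)"
proof -
  have "emeasure (lborel :: (real \<times> real) measure) ({0..w} \<times> {0..h}) = emeasure (lborel \<Otimes>\<^sub>M lborel) ({0..w} \<times> {0..h})"
    by (simp add: lborel_prod)
  also have "\<dots> = emeasure lborel {0..w} * emeasure lborel {0..h}"
    by (rule lborel.emeasure_pair_measure_Times) auto
  also have "\<dots> = ennreal (w * h)" using assms by (simp add: ennreal_mult)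
  finally show ?thesis .
qed

lemma R_sets: "({0..w} \<times> {0..h} :: (real \<times> real) set) \<in> sets lborel"
proof -
  have "closed ({0..w} \<times> {0..h} :: (real \<times> real) set)" by (intro closed_Times closed_atLeastAtMost)
  thus ?thesis by simp
qed

lemma meas_RR:
  assumes "0 \<le> w" "0 \<le> h"
  shows "emeasure (lborel :: ((real \<times> real) \<times> (real \<times> real)) measure) (({0..w} \<times> {0..h}) \<times> ({0..w} \<times> {0..h})) = ennreal ((w * h)\<^sup>2)"
proof -
  have "emeasure (lborel :: ((real \<times> real) \<times> (real \<times> real)) measure) (({0..w} \<times> {0..h}) \<times> ({0..w} \<times> {0..h}))
      = emeasure (lborel \<Otimes>\<^sub>M lborel) (({0..w} \<times> {0..h}) \<times> ({0..w} \<times> {0..h}))"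
    by (simp add: lborel_prod)
  also have "\<dots> = emeasure lborel ({0..w} \<times> {0..h}) * emeasure lborel ({0..w} \<times> {0..h})"
    by (rule lborel.emeasure_pair_measure_Times) (rule R_sets)+
  also have "\<dots> = ennreal ((w * h)\<^sup>2)" using assms by (simp add: meas_R ennreal_mult power2_eq_square)
  finally show ?thesis .
qed

lemma RR_sets: "(({0..w} \<times> {0..h}) \<times> ({0..w} \<times> {0..h}) :: ((real \<times> real) \<times> (real \<times> real)) set) \<in> sets lborel"
proof -
  have "closed (({0..w} \<times> {0..h}) \<times> ({0..w} \<times> {0..h}) :: ((real \<times> real) \<times> (real \<times> real)) set)"
    by (intro closed_Times closed_atLeastAtMost)
  thus ?thesis by simp
qed

lemma abs_max_diff: "\<bar>max (x1::real) x2 - max y1 y2\<bar> \<le> max \<bar>x1 - y1\<bar> \<bar>x2 - y2\<bar>"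
  by (simp add: max_def abs_if)

definition sf :: "('v set \<Rightarrow> real \<times> real) \<Rightarrow> real \<times> real \<Rightarrow> real \<times> real \<Rightarrow> 'v set \<Rightarrow> real" where
  "sf F p q s = max ((fst (F s) - fst (line_base p q)) / fst (line_dir p q))
                    ((snd (F s) - snd (line_base p q)) / snd (line_dir p q))"

lemma line_dir_pos:
  assumes "vlt p q"
  shows "0 < fst (line_dir p q)" "0 < snd (line_dir p q)" "0 < norm (q - p)"
proof -
  have "q \<noteq> p" using assms unfolding vlt_def by auto
  hence n: "0 < norm (q - p)" by simp
  show "0 < norm (q - p)" by (rule n)
  show "0 < fst (line_dir p q)" "0 < snd (line_dir p q)"
    unfolding line_dir_def using n assms unfolding vlt_def by auto
qed

lemma lam_Delta1: "vlt p q \<Longrightarrow> (line_lam_p p q, line_lam_q p q) \<in> Delta1"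
  unfolding Delta1_def line_lam_q_def using line_dir_pos(3) by auto

lemma slice_subl:
  assumes "vlt p q"
  shows "slice K (sublevel_bifilt K F) p q = subl K (sf F p q)"
proof -
  have a: "0 < fst (line_dir p q)" "0 < snd (line_dir p q)" using line_dir_pos[OF assms] by auto
  have "{s \<in> K. vle (F s) (line_base p q + \<alpha> *\<^sub>R line_dir p q)} = {s \<in> K. sf F p q s \<le> \<alpha>}" for \<alpha>
    unfolding vle_def sf_def using a by (auto simp: pos_divide_le_eq algebra_simps)
  thus ?thesis unfolding slice_def subl_def sublevel_bifilt_def by simp
qed

lemma sf_mono:
  assumes m: "monotone_filter K F" and p: "vlt p q"
  shows "mono_on_K K (sf F p q)"
  unfolding mono_on_K_def
proof (intro ballI impI)
  fix s t assume st: "s \<in> K" "t \<in> K" "t \<subseteq> s"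
  have a: "0 < fst (line_dir p q)" "0 < snd (line_dir p q)" using line_dir_pos[OF p] by auto
  have "vle (F t) (F s)" using m st unfolding monotone_filter_def by blast
  hence "fst (F t) \<le> fst (F s)" "snd (F t) \<le> snd (F s)" unfolding vle_def by auto
  thus "sf F p q t \<le> sf F p q s" unfolding sf_def
    by (intro max.mono divide_right_mono diff_right_mono) (use a in auto)
qed

lemma sup_dist_ge:
  assumes "finite K" "s \<in> K"
  shows "\<bar>fst (F s) - fst (G s)\<bar> \<le> sup_dist K F G" "\<bar>snd (F s) - snd (G s)\<bar> \<le> sup_dist K F G"
    "0 \<le> sup_dist K F G"
proof -
  have "max \<bar>fst (F s) - fst (G s)\<bar> \<bar>snd (F s) - snd (G s)\<bar> \<le> sup_dist K F G"
    unfolding sup_dist_def by (rule Max_ge) (use assms in auto)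
  thus "\<bar>fst (F s) - fst (G s)\<bar> \<le> sup_dist K F G" "\<bar>snd (F s) - snd (G s)\<bar> \<le> sup_dist K F G" by auto
next
  show "0 \<le> sup_dist K F G"
    unfolding sup_dist_def by (rule Max_ge) (use assms in auto)
qed

lemma sup_dist_nonneg: "finite K \<Longrightarrow> 0 \<le> sup_dist K F G"
  unfolding sup_dist_def by (rule Max_ge) auto

lemma sf_close:
  assumes fK: "finite K" and p: "vlt p q" and s: "s \<in> K"
  shows "\<bar>sf F p q s - sf G p q s\<bar> \<le> sup_dist K F G / line_hat p q"
proof -
  have a: "0 < fst (line_dir p q)" "0 < snd (line_dir p q)" using line_dir_pos[OF p] by auto
  have h: "0 < line_hat p q" unfolding line_hat_def using a by simp
  have h1: "line_hat p q \<le> fst (line_dir p q)" "line_hat p q \<le> snd (line_dir p q)" unfolding line_hat_def by auto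
  have S0: "0 \<le> sup_dist K F G" by (rule sup_dist_nonneg[OF fK])
  have e1: "\<bar>(fst (F s) - fst (line_base p q)) / fst (line_dir p q) - (fst (G s) - fst (line_base p q)) / fst (line_dir p q)\<bar>
      = \<bar>fst (F s) - fst (G s)\<bar> / fst (line_dir p q)"
    using a by (simp add: diff_divide_distrib[symmetric])
  have e2: "\<bar>(snd (F s) - snd (line_base p q)) / snd (line_dir p q) - (snd (G s) - snd (line_base p q)) / snd (line_dir p q)\<bar>
      = \<bar>snd (F s) - snd (G s)\<bar> / snd (line_dir p q)"
    using a by (simp add: diff_divide_distrib[symmetric])
  have b1: "\<bar>fst (F s) - fst (G s)\<bar> / fst (line_dir p q) \<le> sup_dist K F G / line_hat p q"
    by (rule frac_le[OF S0 sup_dist_ge(1)[OF fK s] h h1(1)])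
  have b2: "\<bar>snd (F s) - snd (G s)\<bar> / snd (line_dir p q) \<le> sup_dist K F G / line_hat p q"
    by (rule frac_le[OF S0 sup_dist_ge(2)[OF fK s] h h1(2)])
  have "\<bar>sf F p q s - sf G p q s\<bar> \<le> max \<bar>(fst (F s) - fst (line_base p q)) / fst (line_dir p q) - (fst (G s) - fst (line_base p q)) / fst (line_dir p q)\<bar>
      \<bar>(snd (F s) - snd (line_base p q)) / snd (line_dir p q) - (snd (G s) - snd (line_base p q)) / snd (line_dir p q)\<bar>"
    unfolding sf_def by (rule abs_max_diff)
  also have "\<dots> = max (\<bar>fst (F s) - fst (G s)\<bar> / fst (line_dir p q)) (\<bar>snd (F s) - snd (G s)\<bar> / snd (line_dir p q))"
    unfolding e1 e2 ..
  also have "\<dots> \<le> sup_dist K F G / line_hat p q" using b1 b2 by (rule max.boundedI)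
  finally show ?thesis .
qed

lemma sq_bound: "\<bar>x\<bar> \<le> (y::real) \<Longrightarrow> x\<^sup>2 \<le> y\<^sup>2"
  by (metis abs_ge_zero power2_abs power_mono)

context stab
begin

lemma pointwise:
  assumes K: "fin_simplicial_complex K" and mF: "monotone_filter K F" and mG: "monotone_filter K G"
    and z: "z \<in> Delta2"
  shows "(Phi \<phi> ({0..w} \<times> {0..h}) K (sublevel_bifilt K F) z - Phi \<phi> ({0..w} \<times> {0..h}) K (sublevel_bifilt K G) z)\<^sup>2
     \<le> (v3 * real (card K) * sup_dist K F G)\<^sup>2 * indicator (({0..w} \<times> {0..h}) \<times> ({0..w} \<times> {0..h})) z"
proof -
  define R :: "(real \<times> real) set" where "R = {0..w} \<times> {0..h}"
  obtain p q where zpq: "z = (p, q)" by (cases z)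
  have pq: "vlt p q" using z unfolding Delta2_def zpq by simp
  have fK: "finite K" using K by (rule fsc_finite)
  define S where "S = sup_dist K F G"
  define hh where "hh = line_hat p q"
  define lam where "lam = (line_lam_p p q, line_lam_q p q)"
  have a: "0 < fst (line_dir p q)" "0 < snd (line_dir p q)" using line_dir_pos[OF pq] by auto
  have hh0: "0 < hh" unfolding hh_def line_hat_def using a by simp
  have S0: "0 \<le> S" unfolding S_def by (rule sup_dist_nonneg[OF fK])
  have lamD: "lam \<in> Delta1" unfolding lam_def by (rule lam_Delta1[OF pq])
  have PhiF: "Phi \<phi> R K (sublevel_bifilt K F) z = indicator R p * indicator R q * hh * \<phi> (subl K (sf F p q)) lam"
    unfolding Phi_def zpq Let_def hh_def lam_def by (simp add: slice_subl[OF pq])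
  have PhiG: "Phi \<phi> R K (sublevel_bifilt K G) z = indicator R p * indicator R q * hh * \<phi> (subl K (sf G p q)) lam"
    unfolding Phi_def zpq Let_def hh_def lam_def by (simp add: slice_subl[OF pq])
  have D0: "0 \<le> S / hh" using S0 hh0 by simp
  have st: "\<bar>\<phi> (subl K (sf F p q)) lam - \<phi> (subl K (sf G p q)) lam\<bar> \<le> v3 * real (card K) * (S / hh)"
    by (rule stable_all[OF K sf_mono[OF mF pq] sf_mono[OF mG pq] _ D0 lamD])
       (unfold S_def hh_def, rule sf_close[OF fK pq])
  have ind: "indicator (R \<times> R) z = (indicator R p * indicator R q :: real)"
    unfolding zpq by (simp add: indicator_def)
  show ?thesis
  proof (cases "p \<in> R \<and> q \<in> R")
    case True
    have "\<bar>hh * (\<phi> (subl K (sf F p q)) lam - \<phi> (subl K (sf G p q)) lam)\<bar> \<le> hh * (v3 * real (card K) * (S / hh))"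
    proof -
      have "\<bar>hh\<bar> = hh" using hh0 by simp
      moreover have "hh * \<bar>\<phi> (subl K (sf F p q)) lam - \<phi> (subl K (sf G p q)) lam\<bar> \<le> hh * (v3 * real (card K) * (S / hh))"
        by (rule mult_left_mono[OF st]) (use hh0 in simp)
      ultimately show ?thesis unfolding abs_mult by simp
    qed
    also have "\<dots> = v3 * real (card K) * S" using hh0 by simp
    finally have b: "\<bar>hh * (\<phi> (subl K (sf F p q)) lam - \<phi> (subl K (sf G p q)) lam)\<bar> \<le> v3 * real (card K) * S" .
    have "(Phi \<phi> R K (sublevel_bifilt K F) z - Phi \<phi> R K (sublevel_bifilt K G) z) = hh * (\<phi> (subl K (sf F p q)) lam - \<phi> (subl K (sf G p q)) lam)"
      unfolding PhiF PhiG using True by (simp add: algebra_simps)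
    hence "(Phi \<phi> R K (sublevel_bifilt K F) z - Phi \<phi> R K (sublevel_bifilt K G) z)\<^sup>2 \<le> (v3 * real (card K) * S)\<^sup>2"
      using sq_bound[OF b] by simp
    moreover have "indicator (R \<times> R) z = (1::real)" unfolding ind using True by simp
    ultimately show ?thesis unfolding R_def S_def by simp
  next
    case False
    hence "indicator R p * indicator R q = (0::real)" by auto
    hence "Phi \<phi> R K (sublevel_bifilt K F) z = 0" "Phi \<phi> R K (sublevel_bifilt K G) z = 0"
      unfolding PhiF PhiG by auto
    thus ?thesis unfolding R_def by simp
  qed
qed

end



theorem corollary1:
  fixes \<phi> :: "'v monofilt \<Rightarrow> real \<times> real \<Rightarrow> real"
  assumes "feature_map \<phi>" and "absolutely_bounded \<phi>" and "internally_stable \<phi>"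
  shows "\<exists>C\<ge>0. \<forall>(K::'v set set) F G (w::real) (h::real).
           fin_simplicial_complex K \<and> monotone_filter K F \<and> monotone_filter K G \<and> 0 \<le> w \<and> 0 \<le> h \<longrightarrow>
           L2_dist_sq (Phi \<phi> ({0..w} \<times> {0..h}) K (sublevel_bifilt K F))
                      (Phi \<phi> ({0..w} \<times> {0..h}) K (sublevel_bifilt K G))
             \<le> ennreal ((C * real (card K) * (w * h) * sup_dist K F G)\<^sup>2)"
proof -
  obtain v3 where v3: "0 < v3" and IS: "\<And>M N n x. mono_filtration M \<and> mono_filtration N \<and> mf_size M = n \<and> mf_size N = n \<and> x \<in> Delta1 \<longrightarrow>
      ereal \<bar>\<phi> M x - \<phi> N x\<bar> \<le> ereal (v3 * real n) * d_B M N"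
    using assms(3) unfolding internally_stable_def by blast
  interpret stab \<phi> v3
  proof
    show "0 < v3" by (rule v3)
    fix M N :: "'v monofilt" and x assume "mono_filtration M" "mono_filtration N" "mf_size M = mf_size N" "x \<in> Delta1"
    thus "ereal \<bar>\<phi> M x - \<phi> N x\<bar> \<le> ereal (v3 * real (mf_size M)) * d_B M N"
      using IS[of M N "mf_size M" x] by simp
  qed
  show ?thesis
  proof (rule exI[of _ v3], intro conjI allI impI)
    show "0 \<le> v3" using v3 by simp
    fix K :: "'v set set" and F G and w h :: real
    assume a: "fin_simplicial_complex K \<and> monotone_filter K F \<and> monotone_filter K G \<and> 0 \<le> w \<and> 0 \<le> h"
    hence K: "fin_simplicial_complex K" and mF: "monotone_filter K F" and mG: "monotone_filter K G"
      and w: "0 \<le> w" and h: "0 \<le> h" by auto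
    define c where "c = (v3 * real (card K) * sup_dist K F G)\<^sup>2"
    define RR :: "((real \<times> real) \<times> (real \<times> real)) set" where "RR = ({0..w} \<times> {0..h}) \<times> ({0..w} \<times> {0..h})"
    have c0: "0 \<le> c" unfolding c_def by simp
    have pw: "ennreal ((Phi \<phi> ({0..w} \<times> {0..h}) K (sublevel_bifilt K F) z - Phi \<phi> ({0..w} \<times> {0..h}) K (sublevel_bifilt K G) z)\<^sup>2) * indicator Delta2 z
        \<le> ennreal c * indicator RR z" for z
    proof (cases "z \<in> Delta2")
      case True
      have "(Phi \<phi> ({0..w} \<times> {0..h}) K (sublevel_bifilt K F) z - Phi \<phi> ({0..w} \<times> {0..h}) K (sublevel_bifilt K G) z)\<^sup>2
          \<le> c * indicator RR z" unfolding c_def RR_def by (rule pointwise[OF K mF mG True])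
      hence "ennreal ((Phi \<phi> ({0..w} \<times> {0..h}) K (sublevel_bifilt K F) z - Phi \<phi> ({0..w} \<times> {0..h}) K (sublevel_bifilt K G) z)\<^sup>2)
          \<le> ennreal (c * indicator RR z)" by (rule ennreal_leI)
      also have "\<dots> = ennreal c * indicator RR z" by (simp add: indicator_def)
      finally show ?thesis using True by simp
    next
      case False thus ?thesis by simp
    qed
    have "L2_dist_sq (Phi \<phi> ({0..w} \<times> {0..h}) K (sublevel_bifilt K F)) (Phi \<phi> ({0..w} \<times> {0..h}) K (sublevel_bifilt K G))
        \<le> (\<integral>\<^sup>+ z. ennreal c * indicator RR z \<partial>lborel)"
      unfolding L2_dist_sq_def by (rule nn_integral_mono) (rule pw)
    also have "\<dots> = ennreal c * emeasure lborel RR"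
      unfolding RR_def by (rule nn_integral_cmult_indicator[OF RR_sets])
    also have "\<dots> = ennreal c * ennreal ((w * h)\<^sup>2)" unfolding RR_def meas_RR[OF w h] ..
    also have "\<dots> = ennreal ((v3 * real (card K) * (w * h) * sup_dist K F G)\<^sup>2)"
      unfolding c_def by (simp add: ennreal_mult[symmetric] power_mult_distrib algebra_simps)
    finally show "L2_dist_sq (Phi \<phi> ({0..w} \<times> {0..h}) K (sublevel_bifilt K F)) (Phi \<phi> ({0..w} \<times> {0..h}) K (sublevel_bifilt K G))
        \<le> ennreal ((v3 * real (card K) * (w * h) * sup_dist K F G)\<^sup>2)" .
  qed
qed


end
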